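(* Let $t\ge2$, $a\in\{0,1\}$, let $\pi$ be a partition with $t$-core $\kappa$, let $(n_0,\dots,n_{t-1})$ be the $n$-vector of $\kappa$, and let $(\hat\pi_0,\dots,\hat\pi_{t-1})$ be the $t$-quotient of $\pi$. If $t\equiv 2a\pmod 4$, then \[ \mathrm{srank}(\pi)\equiv\mathrm{srank}(\kappa)+2a\sum_{i=0}^{t-1}|\hat\pi_i|\pmod4. \] If $t\equiv 1+2a\pmod4$, then \[ \mathrm{srank}(\pi)\equiv\mathrm{srank}(\kappa)+2\sum_{i=0}^{t-1}(n_i+i+a)|\hat\pi_i|+\sum_{i=0}^{t-1}\mathrm{srank}(\hat\pi_i)\pmod4. \]
   Context: For a partition $\pi$, $|\pi|$ is the sum of parts, $\pi'$ its conjugate, $\mathcal O(\pi)$ the number of odd parts, and $\mathrm{srank}(\pi)=\mathcal O(\pi)-\mathcal O(\pi')$. A $t$-core is a partition with no rim hook of length $t$; the $t$-core of $\pi$ is obtained by successively removing rim hooks of length $t$ as long as possible. The cell in row $a'$, column $b'$ of a Young diagram is labelled by $b'-a' \bmod t$. For a $t$-core $\kappa$ with $r_i$ cells labelled $i$, the $n$-vector is $(r_0-r_1,r_1-r_2,\dots,r_{t-1}-r_0)$. $t$-quotient: for $\pi=(\lambda_1\ge\lambda_2\ge\cdots)$ with $\lambda_j=0$ for large $j$, let $S=\{\lambda_j-j:j\ge1\}$ and for $0\le c\le t-1$ let $S_c=\{k\in\mathbb Z: tk+c\in S\}$. Then $\hat\pi_c$ is the partition whose parts are the numbers $\#\{s\in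 S_c:s>g\}$ as $g$ ranges over integers not in $S_c$ (only finitely many are positive). The $t$-quotient is $(\hat\pi_0,\dots,\hat\pi_{t-1})$, and $|\pi|=|\kappa|+t\sum_i|\hat\pi_i|$. *)

theory Defs
  imports Main
begin

definition is_partition :: "nat list \<Rightarrow> bool" where
  "is_partition xs \<longleftrightarrow> sorted_wrt (\<ge>) xs \<and> 0 \<notin> set xs"

definition psize :: "nat list \<Rightarrow> nat" where
  "psize xs = sum_list xs"

definition conjugate :: "nat list \<Rightarrow> nat list" where
  "conjugate xs = map (\<lambda>j. length (filter (\<lambda>x. x > j) xs)) [0..<(if xs = [] then 0 else Max (set xs))]"

definition odd_parts :: "nat list \<Rightarrow> nat" where
  "odd_parts xs = length (filter odd xs)"

definition srank :: "nat list \<Rightarrow> int" where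
  "srank xs = int (odd_parts xs) - int (odd_parts (conjugate xs))"

definition diagram :: "nat list \<Rightarrow> (nat \<times> nat) set" where
  "diagram xs = {(i, j). i < length xs \<and> j < xs ! i}"

definition cell_adj :: "(nat \<times> nat) set \<Rightarrow> ((nat \<times> nat) \<times> (nat \<times> nat)) set" where
  "cell_adj H = {(p, q). p \<in> H \<and> q \<in> H \<and>
     ((fst p = fst q \<and> (snd q = snd p + 1 \<or> snd p = snd q + 1)) \<or>
      (snd p = snd q \<and> (fst q = fst p + 1 \<or> fst p = fst q + 1)))}"

definition cells_connected :: "(nat \<times> nat) set \<Rightarrow> bool" where
  "cells_connected H \<longleftrightarrow> (\<forall>p\<in>H. \<forall>q\<in>H. (p, q) \<in> (cell_adj H)\<^sup>*)"

definition no_2x2 :: "(nat \<times> nat) set \<Rightarrow> bool" where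
  "no_2x2 H \<longleftrightarrow> \<not> (\<exists>i j. (i, j) \<in> H \<and> (i + 1, j) \<in> H \<and> (i, j + 1) \<in> H \<and> (i + 1, j + 1) \<in> H)"

definition rim_hook_removal :: "nat \<Rightarrow> nat list \<Rightarrow> nat list \<Rightarrow> bool" where
  "rim_hook_removal t lam mu \<longleftrightarrow> is_partition lam \<and> is_partition mu \<and>
     diagram mu \<subseteq> diagram lam \<and> card (diagram lam - diagram mu) = t \<and>
     cells_connected (diagram lam - diagram mu) \<and> no_2x2 (diagram lam - diagram mu)"

definition is_tcore :: "nat \<Rightarrow> nat list \<Rightarrow> bool" where
  "is_tcore t k \<longleftrightarrow> is_partition k \<and> \<not> (\<exists>mu. rim_hook_removal t k mu)"

definition tcore_of :: "nat \<Rightarrow> nat list \<Rightarrow> nat list \<Rightarrow> bool" where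
  "tcore_of t pi k \<longleftrightarrow> (rim_hook_removal t)\<^sup>*\<^sup>* pi k \<and> is_tcore t k"

definition label_count :: "nat \<Rightarrow> nat list \<Rightarrow> nat \<Rightarrow> int" where
  "label_count t k i = int (card {(r, c) \<in> diagram k. (int c - int r) mod int t = int i})"

definition nvec :: "nat \<Rightarrow> nat list \<Rightarrow> nat \<Rightarrow> int" where
  "nvec t k i = label_count t k i - label_count t k ((i + 1) mod t)"

definition part1 :: "nat list \<Rightarrow> nat \<Rightarrow> nat" where
  "part1 xs j = (if 1 \<le> j \<and> j \<le> length xs then xs ! (j - 1) else 0)"

definition beta_set :: "nat list \<Rightarrow> int set" where
  "beta_set xs = {int (part1 xs j) - int j | j. j \<ge> 1}"

definition beta_runner :: "nat \<Rightarrow> nat list \<Rightarrow> nat \<Rightarrow> int set" where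
  "beta_runner t xs c = {k. int t * k + int c \<in> beta_set xs}"

definition count_above :: "int set \<Rightarrow> int \<Rightarrow> nat" where
  "count_above S g = card {s \<in> S. s > g}"

definition quotient_comp :: "nat \<Rightarrow> nat list \<Rightarrow> nat \<Rightarrow> nat list" where
  "quotient_comp t xs c =
     (let S = beta_runner t xs c;
          G = {g. g \<notin> S \<and> count_above S g > 0}
      in rev (sort (map (count_above S) (sorted_list_of_set G))))"

end

theory Submission
  imports Defs "HOL-Library.Multiset"
begin

lemma len_filter_mset: "mset xs = mset ys \<Longrightarrow> length (filter P xs) = length (filter P ys)"
  by (metis mset_filter size_mset)

lemma conj_mset: "mset xs = mset ys \<Longrightarrow> conjugate xs = conjugate ys"
proof -
  assume a: "mset xs = mset ys"
  then have s: "set xs = set ys" by (rule mset_eq_setD)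
  have e: "(xs = []) = (ys = [])" using s by auto
  have l: "\<And>j. length (filter (\<lambda>x. x > j) xs) = length (filter (\<lambda>x. x > j) ys)"
    by (rule len_filter_mset[OF a])
  show ?thesis unfolding conjugate_def s e l ..
qed

lemma srank_mset: "mset xs = mset ys \<Longrightarrow> srank xs = srank ys"
  unfolding srank_def odd_parts_def
proof -
  assume a: "mset xs = mset ys"
  show "int (length (filter odd xs)) - int (length (filter odd (conjugate xs))) =
    int (length (filter odd ys)) - int (length (filter odd (conjugate ys)))"
    using len_filter_mset[OF a, of odd] conj_mset[OF a] by simp
qed
lemma conj_zero: "conjugate (0 # xs) = conjugate xs"
proof (cases "xs = []")
  case True then show ?thesis by (simp add: conjugate_def)
next
  case False
  then have "Max (set (0#xs)) = Max (set xs)"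
    by (simp add: max_def)
  then show ?thesis using False by (simp add: conjugate_def)
qed

lemma srank_zero: "srank (0 # xs) = srank xs"
  unfolding srank_def odd_parts_def by (simp add: conj_zero)

lemma len_filter_upt: "length (filter P (map f [0..<M])) = card {j. j < M \<and> P (f j)}"
proof (induct M)
  case 0 then show ?case by simp
next
  case (Suc M)
  have "{j. j < Suc M \<and> P (f j)} = {j. j < M \<and> P (f j)} \<union> (if P (f M) then {M} else {})"
    by (auto simp: less_Suc_eq)
  then show ?case using Suc by (auto simp: card_insert_if less_Suc_eq)
qed

lemma oddconj: assumes "\<forall>x\<in>set xs. x \<le> N"
  shows "odd_parts (conjugate xs) = card {j. j < N \<and> odd (length (filter (\<lambda>x. j < x) xs))}"
proof -
  define M where "M = (if xs = [] then 0 else Max (set xs))"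
  have MN: "M \<le> N" using assms by (auto simp: M_def)
  have big: "\<And>j. M \<le> j \<Longrightarrow> length (filter (\<lambda>x. j < x) xs) = 0"
  proof -
    fix j assume "M \<le> j"
    then have "\<forall>x\<in>set xs. x \<le> j" by (auto simp: M_def split: if_splits)
    then show "length (filter (\<lambda>x. j < x) xs) = 0" by (auto simp: filter_empty_conv)
  qed
  have "odd_parts (conjugate xs) = length (filter odd (map (\<lambda>j. length (filter (\<lambda>x. x > j) xs)) [0..<M]))"
    by (simp add: odd_parts_def conjugate_def M_def)
  also have "\<dots> = card {j. j < M \<and> odd (length (filter (\<lambda>x. j < x) xs))}"
    by (rule len_filter_upt)
  also have "{j. j < M \<and> odd (length (filter (\<lambda>x. j < x) xs))} = {j. j < N \<and> odd (length (filter (\<lambda>x. j < x) xs))}"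
  proof (intro Collect_cong iffI)
    fix j assume "j < M \<and> odd (length (filter (\<lambda>x. j < x) xs))"
    then show "j < N \<and> odd (length (filter (\<lambda>x. j < x) xs))" using MN by auto
  next
    fix j assume a: "j < N \<and> odd (length (filter (\<lambda>x. j < x) xs))"
    then have "\<not> M \<le> j" using big by fastforce
    then show "j < M \<and> odd (length (filter (\<lambda>x. j < x) xs))" using a by simp
  qed
  finally show ?thesis .
qed


lemma card_split_one:
  assumes "a < (N::nat)"
  shows "card {j. j < N \<and> P j} = card {j. j < N \<and> j \<noteq> a \<and> P j} + (if P a then 1 else 0)"
proof -
  have "{j. j < N \<and> P j} = {j. j < N \<and> j \<noteq> a \<and> P j} \<union> (if P a then {a} else {})"
    using assms by auto
  moreover have "finite {j. j < N \<and> j \<noteq> a \<and> P j}" by (rule finite_subset[of _ "{..<N}"]) auto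
  ultimately show ?thesis by (auto simp: card_insert_if)
qed

lemma mem_le_sum: "(x::nat) \<in> set ys \<Longrightarrow> x \<le> k + sum_list ys"
proof -
  assume "x \<in> set ys"
  then have "x \<le> sum_list ys" by (induct ys) auto
  then show ?thesis by simp
qed

lemma srank_dec0:
  "(srank (Suc m # ys) - srank (m # ys)) mod 4 =
     (if even (Suc m + length (filter (\<lambda>y. m < y) ys)) then 2 else 0)"
proof -
  define N where "N = Suc m + sum_list ys"
  have N': "N = Suc m + sum_list ys" by (simp add: N_def)
  have b1: "\<forall>x\<in>set (Suc m # ys). x \<le> N" using mem_le_sum[of _ ys "Suc m"] by (auto simp: N_def)
  have b2: "\<forall>x\<in>set (m # ys). x \<le> N" using mem_le_sum[of _ ys "Suc m"] by (auto simp: N_def)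
  define p where "p = length (filter (\<lambda>y. m < y) ys)"
  define c where "c = (\<lambda>j. length (filter (\<lambda>x. j < x) ys))"
  have c1: "\<And>j. length (filter (\<lambda>x. j < x) (Suc m # ys)) = (if j < Suc m then 1 else 0) + c j"
    by (simp add: c_def)
  have c2: "\<And>j. length (filter (\<lambda>x. j < x) (m # ys)) = (if j < m then 1 else 0) + c j"
    by (simp add: c_def)
  have cp: "c m = p" unfolding c_def p_def ..
  have aN: "m < N" by (simp add: N_def)
  have A: "{j. j < N \<and> j \<noteq> m \<and> odd (length (filter (\<lambda>x. j < x) (Suc m # ys)))}
        = {j. j < N \<and> j \<noteq> m \<and> odd (length (filter (\<lambda>x. j < x) (m # ys)))}"
    unfolding c1 c2 by (intro Collect_cong) auto
  have o1: "odd_parts (conjugate (Suc m # ys)) = card {j. j < N \<and> j \<noteq> m \<and> odd (length (filter (\<lambda>x. j < x) (Suc m # ys)))}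
        + (if odd (Suc p) then 1 else 0)"
    unfolding oddconj[OF b1] card_split_one[OF aN, of "\<lambda>j. odd (length (filter (\<lambda>x. j < x) (Suc m # ys)))"]
    unfolding c1 cp by simp
  have o2: "odd_parts (conjugate (m # ys)) = card {j. j < N \<and> j \<noteq> m \<and> odd (length (filter (\<lambda>x. j < x) (m # ys)))}
        + (if odd p then 1 else 0)"
    unfolding oddconj[OF b2] card_split_one[OF aN, of "\<lambda>j. odd (length (filter (\<lambda>x. j < x) (m # ys)))"]
    unfolding c2 cp by simp
  have e1: "odd_parts (Suc m # ys) = (if odd (Suc m) then 1 else 0) + odd_parts ys" by (simp add: odd_parts_def)
  have e2: "odd_parts (m # ys) = (if odd m then 1 else 0) + odd_parts ys" by (simp add: odd_parts_def)
  show ?thesis unfolding srank_def o1 o2 e1 e2 A p_def[symmetric]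
    by (cases "even m"; cases "even p") auto
qed

lemma srank_dec:
  assumes m: "m \<ge> 1"
  shows "(srank (m # ys) - srank ((m - 1) # ys)) mod 4 =
     (if even (m + length (filter (\<lambda>y. m \<le> y) ys)) then 2 else 0)"
proof -
  obtain m0 where m0: "m = Suc m0" using m by (cases m) auto
  have "filter (\<lambda>y. m \<le> y) ys = filter (\<lambda>y. m0 < y) ys" unfolding m0 by (simp add: Suc_le_eq)
  then show ?thesis using srank_dec0[of m0 ys] unfolding m0 by simp
qed

definition oc :: "nat list \<Rightarrow> nat" where
  "oc xs = card {(i, j). (i, j) \<in> diagram xs \<and> odd (i + j)}"

lemma diagram_snoc: "diagram (ys @ [m]) = diagram ys \<union> {(length ys, j) | j. j < m}"
  unfolding diagram_def by (auto simp: nth_append less_Suc_eq)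

lemma diagram_finite: "finite (diagram xs)"
proof -
  have "diagram xs \<subseteq> {0..<length xs} \<times> {0..<sum_list xs}"
    unfolding diagram_def
    by (auto simp: elem_le_sum_list less_le_trans)
  then show ?thesis by (rule finite_subset) simp
qed

lemma srank_nil: "srank [] = 0"
  by (simp add: srank_def odd_parts_def conjugate_def)

lemma srank_oc:
  assumes "sorted_wrt (\<ge>) xs"
  shows "srank xs mod 4 = (2 * int (oc xs)) mod 4"
  using assms
proof (induction "sum_list xs + length xs" arbitrary: xs rule: less_induct)
  case less
  show ?case
  proof (cases xs rule: rev_exhaust)
    case Nil
    then show ?thesis by (simp add: srank_nil oc_def diagram_def)
  next
    case (snoc ys m)
    have sys: "sorted_wrt (\<ge>) ys" using less.prems snoc by (simp add: sorted_wrt_append)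
    have ge: "\<forall>y\<in>set ys. m \<le> y" using less.prems snoc by (simp add: sorted_wrt_append)
    show ?thesis
    proof (cases "m = 0")
      case True
      have "srank xs = srank (0 # ys)" using snoc True by (intro srank_mset) simp
      also have "\<dots> = srank ys" by (rule srank_zero)
      finally have s: "srank xs = srank ys" .
      have d: "diagram xs = diagram ys" using snoc True by (simp add: diagram_snoc)
      have "srank ys mod 4 = (2 * int (oc ys)) mod 4"
        using less.hyps[of ys] sys snoc by simp
      then show ?thesis using s d by (simp add: oc_def)
    next
      case False
      define xs' where "xs' = ys @ [m - 1]"
      have sxs': "sorted_wrt (\<ge>) xs'" using sys ge by (auto simp: xs'_def sorted_wrt_append)
      have IH: "srank xs' mod 4 = (2 * int (oc xs')) mod 4"
        using less.hyps[of xs'] sxs' snoc False by (simp add: xs'_def)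
      have s1: "srank xs = srank (m # ys)" using snoc by (intro srank_mset) simp
      have s2: "srank xs' = srank ((m - 1) # ys)" unfolding xs'_def by (intro srank_mset) simp
      have p: "length (filter (\<lambda>y. m \<le> y) ys) = length ys" using ge by (simp add: filter_id_conv)
      have dec: "(srank xs - srank xs') mod 4 = (if even (m + length ys) then 2 else 0)"
        using srank_dec[of m ys] False unfolding s1 s2 p by simp
      have dd: "diagram xs = insert (length ys, m - 1) (diagram xs')"
      proof -
        obtain m0 where m0: "m = Suc m0" using False by (cases m) auto
        have "{(length ys, j) |j. j < m} = insert (length ys, m - 1) {(length ys, j) |j. j < m - 1}"
          unfolding m0 by (auto simp: less_Suc_eq)
        then show ?thesis unfolding snoc xs'_def diagram_snoc by auto
      qed
      have nin: "(length ys, m - 1) \<notin> diagram xs'"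
        unfolding xs'_def diagram_snoc by (auto simp: diagram_def)
      have fin: "finite {(i, j). (i, j) \<in> diagram xs' \<and> odd (i + j)}"
        using diagram_finite[of xs'] by (rule rev_finite_subset) auto
      have "{(i, j). (i, j) \<in> diagram xs \<and> odd (i + j)} =
            {(i, j). (i, j) \<in> diagram xs' \<and> odd (i + j)} \<union>
            (if odd (length ys + (m - 1)) then {(length ys, m - 1)} else {})"
        unfolding dd by auto
      then have "oc xs = oc xs' + (if odd (length ys + (m - 1)) then 1 else 0)"
        unfolding oc_def using fin nin by (auto simp: card_insert_if)
      moreover have "odd (length ys + (m - 1)) = even (m + length ys)" using False
        by (cases m) auto
      ultimately have ocx: "int (oc xs) = int (oc xs') + (if even (m + length ys) then 1 else 0)" by simp
      have "srank xs mod 4 = ((srank xs - srank xs') mod 4 + srank xs') mod 4"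
        by (metis diff_add_cancel mod_add_left_eq)
      also have "\<dots> = ((if even (m + length ys) then 2 else 0) + srank xs' mod 4) mod 4"
        unfolding dec by (simp add: mod_add_right_eq)
      also have "\<dots> = ((if even (m + length ys) then 2 else 0) + 2 * int (oc xs')) mod 4"
        unfolding IH by (simp add: mod_add_right_eq)
      also have "\<dots> = (2 * int (oc xs)) mod 4" unfolding ocx by (simp add: algebra_simps)
      finally show ?thesis .
    qed
  qed
qed

definition lam :: "nat list \<Rightarrow> nat \<Rightarrow> nat" where
  "lam xs i = (if i < length xs then xs ! i else 0)"

definition bet :: "nat list \<Rightarrow> nat \<Rightarrow> int" where
  "bet xs i = int (lam xs i) - int i - 1"

lemma part1_bet: "j \<ge> 1 \<Longrightarrow> int (part1 xs j) - int j = bet xs (j - 1)"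
  unfolding part1_def bet_def lam_def by auto

lemma beta_set_eq: "beta_set xs = range (bet xs)"
proof (intro set_eqI iffI)
  fix x assume "x \<in> beta_set xs"
  then obtain j where j: "j \<ge> 1" "x = int (part1 xs j) - int j" unfolding beta_set_def by blast
  then show "x \<in> range (bet xs)" using part1_bet[OF j(1)] by simp
next
  fix x assume "x \<in> range (bet xs)"
  then obtain i where i: "x = bet xs i" by blast
  have "x = int (part1 xs (Suc i)) - int (Suc i)" using part1_bet[of "Suc i" xs] i by simp
  then show "x \<in> beta_set xs" unfolding beta_set_def
    by (intro CollectI exI[of _ "Suc i"]) simp
qed

lemma diagram_lam: "diagram xs = {(i, j). j < lam xs i}"
proof (rule set_eqI)
  fix p :: "nat \<times> nat"
  obtain i j where p: "p = (i, j)" by fastforce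
  show "p \<in> diagram xs \<longleftrightarrow> p \<in> {(i, j). j < lam xs i}"
    unfolding p diagram_def lam_def by (cases "i < length xs") simp_all
qed

lemma lam_anti: assumes "sorted_wrt (\<ge>) xs" "i \<le> j" shows "lam xs j \<le> lam xs i"
proof (cases "i = j")
  case False
  then have ij: "i < j" using assms(2) by simp
  show ?thesis
  proof (cases "j < length xs")
    case True
    then show ?thesis using assms(1) ij unfolding lam_def by (auto simp: sorted_wrt_iff_nth_less)
  qed (simp add: lam_def)
qed simp

lemma bet_strict: assumes "sorted_wrt (\<ge>) xs" "i < j" shows "bet xs j < bet xs i"
  using lam_anti[OF assms(1), of i j] assms(2) unfolding bet_def by simp

lemma bet_inj: assumes "sorted_wrt (\<ge>) xs" shows "inj (bet xs)"
proof (rule injI)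
  fix i j assume "bet xs i = bet xs j"
  then show "i = j" using bet_strict[OF assms, of i j] bet_strict[OF assms, of j i]
    by (cases "i < j"; cases "j < i") auto
qed

lemma bet_le: "bet xs i \<le> bet xs 0 - int i" if "sorted_wrt (\<ge>) xs"
  using lam_anti[OF that, of 0 i] unfolding bet_def by simp

lemma lam_big: "length xs \<le> i \<Longrightarrow> lam xs i = 0" by (simp add: lam_def)

lemma lam_pos: "is_partition xs \<Longrightarrow> (0 < lam xs i) = (i < length xs)"
  unfolding is_partition_def lam_def by (auto simp: nth_mem) (metis gr0I nth_mem)

definition bmaya :: "int set \<Rightarrow> bool" where
  "bmaya B \<longleftrightarrow> (\<exists>N. (\<forall>x. x < - N \<longrightarrow> x \<in> B) \<and> (\<forall>x. x > N \<longrightarrow> x \<notin> B))"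

lemma bmaya_beta: assumes "sorted_wrt (\<ge>) xs" shows "bmaya (beta_set xs)"
proof -
  define N where "N = int (length xs) + bet xs 0 + 2"
  have a: "x \<in> beta_set xs" if "x < - N" for x
  proof -
    have "x = bet xs (nat (- x - 1))"
      using that lam_big[of xs "nat (- x - 1)"] unfolding N_def bet_def lam_def
      by (auto split: if_splits)
    then show ?thesis unfolding beta_set_eq by auto
  qed
  have b: "x \<notin> beta_set xs" if "x > N" for x
  proof
    assume "x \<in> beta_set xs"
    then obtain i where "x = bet xs i" unfolding beta_set_eq by auto
    then have "x \<le> bet xs 0" using bet_le[OF assms, of i] by simp
    moreover have "bet xs 0 < N" unfolding N_def bet_def lam_def by auto
    ultimately show False using that by simp
  qed
  show ?thesis unfolding bmaya_def using a b by blast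
qed

lemma bmaya_insert: "bmaya B \<Longrightarrow> bmaya (insert y B)"
  unfolding bmaya_def
proof -
  assume "\<exists>N. (\<forall>x. x < - N \<longrightarrow> x \<in> B) \<and> (\<forall>x. x > N \<longrightarrow> x \<notin> B)"
  then obtain N where N: "\<forall>x. x < - N \<longrightarrow> x \<in> B" "\<forall>x. x > N \<longrightarrow> x \<notin> B" by blast
  show "\<exists>N. (\<forall>x. x < - N \<longrightarrow> x \<in> insert y B) \<and> (\<forall>x. x > N \<longrightarrow> x \<notin> insert y B)"
    by (rule exI[of _ "max N \<bar>y\<bar>"]) (use N in auto)
qed

lemma bmaya_remove: "bmaya B \<Longrightarrow> bmaya (B - {y})"
  unfolding bmaya_def
proof -
  assume "\<exists>N. (\<forall>x. x < - N \<longrightarrow> x \<in> B) \<and> (\<forall>x. x > N \<longrightarrow> x \<notin> B)"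
  then obtain N where N: "\<forall>x. x < - N \<longrightarrow> x \<in> B" "\<forall>x. x > N \<longrightarrow> x \<notin> B" by blast
  show "\<exists>N. (\<forall>x. x < - N \<longrightarrow> x \<in> B - {y}) \<and> (\<forall>x. x > N \<longrightarrow> x \<notin> B - {y})"
    by (rule exI[of _ "max N \<bar>y\<bar>"]) (use N in auto)
qed

lemma bmaya_fin1: "bmaya B \<Longrightarrow> finite {x \<in> B. P x \<and> a \<le> x}"
proof -
  assume "bmaya B"
  then obtain N where N: "\<forall>x. x > N \<longrightarrow> x \<notin> B" unfolding bmaya_def by blast
  have "{x \<in> B. P x \<and> a \<le> x} \<subseteq> {a..N}" using N by (auto simp: not_less[symmetric])
  then show ?thesis by (rule finite_subset) simp
qed

lemma bmaya_fin1': "bmaya B \<Longrightarrow> finite {x \<in> B. a < x}"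
  using bmaya_fin1[of B "\<lambda>_. True" "a + 1"] by (simp add: zless_iff_Suc_zadd add1_zle_eq)

lemma bmaya_fin2: "bmaya B \<Longrightarrow> finite {x. x \<notin> B \<and> P x \<and> x < a}"
proof -
  assume "bmaya B"
  then obtain N where N: "\<forall>x. x < - N \<longrightarrow> x \<in> B" unfolding bmaya_def by blast
  have "{x. x \<notin> B \<and> P x \<and> x < a} \<subseteq> {-N..a}" using N by (auto simp: not_less[symmetric])
  then show ?thesis by (rule finite_subset) simp
qed

definition chB :: "nat \<Rightarrow> int set \<Rightarrow> nat \<Rightarrow> int" where
  "chB t B i = int (card {x \<in> B. x mod int t = int i \<and> 0 \<le> x})
             - int (card {x. x \<notin> B \<and> x mod int t = int i \<and> x < 0})"

lemma chB_remove:
  assumes B: "bmaya B" and x: "x \<in> B"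
  shows "chB t (B - {x}) i = chB t B i - (if x mod int t = int i then 1 else 0)"
proof -
  let ?P = "\<lambda>x. x mod int t = int i"
  have f1: "finite {y \<in> B. ?P y \<and> 0 \<le> y}" by (rule bmaya_fin1[OF B])
  have f2: "finite {y. y \<notin> B \<and> ?P y \<and> y < 0}" by (rule bmaya_fin2[OF B])
  show ?thesis
  proof (cases "0 \<le> x")
    case True
    have s1: "{y \<in> B - {x}. ?P y \<and> 0 \<le> y} = {y \<in> B. ?P y \<and> 0 \<le> y} - {x}" by auto
    have s2: "{y. y \<notin> B - {x} \<and> ?P y \<and> y < 0} = {y. y \<notin> B \<and> ?P y \<and> y < 0}" using True by auto
    show ?thesis
    proof (cases "?P x")
      case px: True
      have xin: "x \<in> {y \<in> B. ?P y \<and> 0 \<le> y}" using x True px by simp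
      have "card {y \<in> B. ?P y \<and> 0 \<le> y} \<ge> 1" using card_gt_0_iff[of "{y \<in> B. ?P y \<and> 0 \<le> y}"] f1 xin by auto
      then show ?thesis unfolding chB_def s1 s2 using f1 xin px by (simp add: card_Diff_singleton of_nat_diff)
    next
      case False
      have "{y \<in> B. ?P y \<and> 0 \<le> y} - {x} = {y \<in> B. ?P y \<and> 0 \<le> y}" using False by auto
      then show ?thesis unfolding chB_def s1 s2 using False by simp
    qed
  next
    case False
    have s1: "{y \<in> B - {x}. ?P y \<and> 0 \<le> y} = {y \<in> B. ?P y \<and> 0 \<le> y}" using False by auto
    have s2: "{y. y \<notin> B - {x} \<and> ?P y \<and> y < 0} = (if ?P x then insert x {y. y \<notin> B \<and> ?P y \<and> y < 0} else {y. y \<notin> B \<and> ?P y \<and> y < 0})"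
      using False by auto
    show ?thesis unfolding chB_def s1 s2 using f2 x by (auto simp: card_insert_if)
  qed
qed

lemma chB_insert:
  assumes B: "bmaya B" and x: "x \<notin> B"
  shows "chB t (insert x B) i = chB t B i + (if x mod int t = int i then 1 else 0)"
proof -
  have "bmaya (insert x B)" by (rule bmaya_insert[OF B])
  from chB_remove[OF this, of x t i] show ?thesis using x by simp
qed

definition ch :: "int set \<Rightarrow> int" where "ch R = chB 1 R 0"

lemma runner_bmaya: assumes "bmaya B" "t \<ge> 1" shows "bmaya {k. int t * k + int c \<in> B}"
proof -
  obtain N where N: "\<forall>x. x < - N \<longrightarrow> x \<in> B" "\<forall>x. x > N \<longrightarrow> x \<notin> B" using assms(1) unfolding bmaya_def by blast
  have "\<forall>k. k < - (\<bar>N\<bar> + int c) \<longrightarrow> int t * k + int c \<in> B"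
  proof (intro allI impI)
    fix k :: int assume k: "k < - (\<bar>N\<bar> + int c)"
    have "int t * k \<le> 1 * k" using k assms(2) by (intro mult_right_mono_neg) auto
    then have "int t * k + int c < - N" using k by simp
    then show "int t * k + int c \<in> B" using N by blast
  qed
  moreover have "\<forall>k. k > (\<bar>N\<bar> + int c) \<longrightarrow> int t * k + int c \<notin> B"
  proof (intro allI impI)
    fix k :: int assume k: "k > (\<bar>N\<bar> + int c)"
    have "1 * k \<le> int t * k" using k assms(2) by (intro mult_right_mono) auto
    then have "int t * k + int c > N" using k by simp
    then show "int t * k + int c \<notin> B" using N by blast
  qed
  ultimately show ?thesis unfolding bmaya_def by blast
qed

lemma ch_runner:
  assumes B: "bmaya B" and t: "t \<ge> 1" and c: "c < t"
  shows "ch {k. int t * k + int c \<in> B} = chB t B c"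
proof -
  let ?f = "\<lambda>k. int t * k + int c"
  have inj: "inj ?f" using t by (auto intro!: injI)
  have pos: "\<And>k. (0 \<le> ?f k) = (0 \<le> k)"
  proof -
    fix k :: int
    show "(0 \<le> ?f k) = (0 \<le> k)"
    proof
      assume a: "0 \<le> ?f k"
      show "0 \<le> k"
      proof (rule ccontr)
        assume "\<not> 0 \<le> k"
        then have "k \<le> -1" by simp
        then have "int t * k \<le> int t * (-1)" by (rule mult_left_mono) simp
        then show False using a c by simp
      qed
    next
      assume "0 \<le> k" then show "0 \<le> ?f k" by simp
    qed
  qed
  have neg: "\<And>k. (?f k < 0) = (k < 0)" using pos by (metis not_le)
  have md: "\<And>k. ?f k mod int t = int c" using c by simp
  have dec: "\<And>x. x mod int t = int c \<Longrightarrow> x = ?f (x div int t)"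
    by (metis add.commute mult_div_mod_eq)
  have i1: "?f ` {k. k \<in> {k. ?f k \<in> B} \<and> k mod int 1 = int 0 \<and> 0 \<le> k} = {x \<in> B. x mod int t = int c \<and> 0 \<le> x}"
  proof (intro set_eqI iffI)
    fix x assume "x \<in> ?f ` {k. k \<in> {k. ?f k \<in> B} \<and> k mod int 1 = int 0 \<and> 0 \<le> k}"
    then show "x \<in> {x \<in> B. x mod int t = int c \<and> 0 \<le> x}" using pos md by auto
  next
    fix x assume x: "x \<in> {x \<in> B. x mod int t = int c \<and> 0 \<le> x}"
    then have e: "?f (x div int t) = x" using dec by (metis (mono_tags, lifting) mem_Collect_eq)
    show "x \<in> ?f ` {k. k \<in> {k. ?f k \<in> B} \<and> k mod int 1 = int 0 \<and> 0 \<le> k}"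
    proof (rule image_eqI[where x="x div int t"])
      show "x = ?f (x div int t)" using e by simp
      have "0 \<le> ?f (x div int t)" using e x by simp
      then have "0 \<le> x div int t" using pos by blast
      then show "x div int t \<in> {k. k \<in> {k. ?f k \<in> B} \<and> k mod int 1 = int 0 \<and> 0 \<le> k}"
        using e x by simp
    qed
  qed
  have i2: "?f ` {k. k \<notin> {k. ?f k \<in> B} \<and> k mod int 1 = int 0 \<and> k < 0} = {x. x \<notin> B \<and> x mod int t = int c \<and> x < 0}"
  proof (intro set_eqI iffI)
    fix x assume "x \<in> ?f ` {k. k \<notin> {k. ?f k \<in> B} \<and> k mod int 1 = int 0 \<and> k < 0}"
    then obtain k where k: "x = ?f k" "?f k \<notin> B" "k < 0" by auto
    have "?f k < 0" using neg k(3) by blast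
    then show "x \<in> {x. x \<notin> B \<and> x mod int t = int c \<and> x < 0}" using k md[of k] by simp
  next
    fix x assume x: "x \<in> {x. x \<notin> B \<and> x mod int t = int c \<and> x < 0}"
    then have e: "?f (x div int t) = x" using dec by (metis (mono_tags, lifting) mem_Collect_eq)
    show "x \<in> ?f ` {k. k \<notin> {k. ?f k \<in> B} \<and> k mod int 1 = int 0 \<and> k < 0}"
    proof (rule image_eqI[where x="x div int t"])
      show "x = ?f (x div int t)" using e by simp
      have "?f (x div int t) < 0" using e x by simp
      then have "x div int t < 0" using neg by blast
      then show "x div int t \<in> {k. k \<notin> {k. ?f k \<in> B} \<and> k mod int 1 = int 0 \<and> k < 0}"
        using e x by simp
    qed
  qed
  have c1: "card {x \<in> B. x mod int t = int c \<and> 0 \<le> x} = card {k. k \<in> {k. ?f k \<in> B} \<and> k mod int 1 = int 0 \<and> 0 \<le> k}"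
    unfolding i1[symmetric] by (rule card_image) (rule inj_on_subset[OF inj], simp)
  have c2: "card {x. x \<notin> B \<and> x mod int t = int c \<and> x < 0} = card {k. k \<notin> {k. ?f k \<in> B} \<and> k mod int 1 = int 0 \<and> k < 0}"
    unfolding i2[symmetric] by (rule card_image) (rule inj_on_subset[OF inj], simp)
  show ?thesis unfolding ch_def chB_def c1 c2 ..
qed

lemma mset_sl: "mset (sorted_list_of_set A) = mset_set A"
  by (metis mset_sorted_list_of_multiset sorted_list_of_mset_set)

lemma lam_snoc0: "lam (ys @ [0]) = lam ys"
  by (rule ext) (simp add: lam_def nth_append)

lemma lam_snoc_upd: "lam (ys @ [a]) = (lam (ys @ [b]))(length ys := a)"
  by (rule ext) (simp add: lam_def nth_append)

lemma beta_lam: "lam xs = lam ys \<Longrightarrow> beta_set xs = beta_set ys"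
  unfolding beta_set_eq bet_def by simp

lemma diagram_lam_eq: "lam xs = lam ys \<Longrightarrow> diagram xs = diagram ys"
  unfolding diagram_lam by simp

lemma nvec_diagram: "diagram xs = diagram ys \<Longrightarrow> nvec t xs i = nvec t ys i"
  unfolding nvec_def label_count_def by simp

lemma range_upd_inj:
  assumes "inj f" "v \<notin> range f"
  shows "range (f(p := v)) = insert v (range f - {f p})"
proof (intro set_eqI iffI)
  fix x assume "x \<in> range (f(p := v))"
  then obtain i where i: "x = (f(p := v)) i" by blast
  show "x \<in> insert v (range f - {f p})"
  proof (cases "i = p")
    case True then show ?thesis using i by simp
  next
    case False
    then have "f i \<noteq> f p" using assms(1) by (meson injD)
    then show ?thesis using i False by simp
  qed
next
  fix x assume x: "x \<in> insert v (range f - {f p})"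
  show "x \<in> range (f(p := v))"
  proof (cases "x = v")
    case True then show ?thesis by (metis fun_upd_same rangeI)
  next
    case False
    then obtain i where i: "x = f i" "i \<noteq> p" using x by auto
    then have "x = (f(p := v)) i" by simp
    then show ?thesis by blast
  qed
qed

lemma modsuc: "((h::int) mod T = (j + 1) mod T) = ((h - 1) mod T = j mod T)"
  unfolding mod_eq_dvd_iff by (simp add: algebra_simps)

lemma nvec_chB:
  assumes "sorted_wrt (\<ge>) xs" "t \<ge> 1" "i < t"
  shows "nvec t xs i = chB t (beta_set xs) i"
  using assms
proof (induction "sum_list xs + length xs" arbitrary: xs i rule: less_induct)
  case less
  show ?case
  proof (cases xs rule: rev_exhaust)
    case Nil
    have d: "diagram [] = {}" by (simp add: diagram_def)
    have b: "beta_set [] = {x. x < 0}"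
    proof (intro set_eqI iffI)
      fix x assume "x \<in> beta_set []"
      then show "x \<in> {x. x < 0}" unfolding beta_set_eq bet_def lam_def by auto
    next
      fix x :: int assume "x \<in> {x. x < 0}"
      then have "x = bet [] (nat (- x - 1))" unfolding bet_def lam_def by simp
      then show "x \<in> beta_set []" unfolding beta_set_eq by (rule image_eqI) simp
    qed
    have e1: "{x \<in> {x. x < 0}. x mod int t = int i \<and> 0 \<le> x} = {}" by auto
    have e2: "{x. x \<notin> {x. x < (0::int)} \<and> x mod int t = int i \<and> x < 0} = {}" by auto
    show ?thesis unfolding Nil b nvec_def label_count_def d chB_def e1 e2 by simp
  next
    case (snoc ys m)
    have sys: "sorted_wrt (\<ge>) ys" using less.prems snoc by (simp add: sorted_wrt_append)
    have ge: "\<forall>y\<in>set ys. m \<le> y" using less.prems snoc by (simp add: sorted_wrt_append)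
    show ?thesis
    proof (cases "m = 0")
      case True
      have l: "lam xs = lam ys" using snoc True lam_snoc0 by simp
      have "nvec t ys i = chB t (beta_set ys) i"
        using less.hyps[of ys] sys snoc less.prems by simp
      then show ?thesis using nvec_diagram[OF diagram_lam_eq[OF l]] beta_lam[OF l] by simp
    next
      case False
      define xs' where "xs' = ys @ [m - 1]"
      define p where "p = length ys"
      have sxs': "sorted_wrt (\<ge>) xs'" using sys ge by (auto simp: xs'_def sorted_wrt_append)
      have IH: "\<And>j. j < t \<Longrightarrow> nvec t xs' j = chB t (beta_set xs') j"
        using less.hyps[of xs'] sxs' snoc False less.prems by (simp add: xs'_def)
      have lx: "lam xs p = m" using snoc by (simp add: lam_def p_def)
      have lx': "lam xs' = (lam xs)(p := m - 1)" using snoc lam_snoc_upd[of ys "m - 1" m] by (simp add: xs'_def p_def)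
      define h where "h = bet xs p"
      have hv: "h = int m - int p - 1" unfolding h_def bet_def lx by simp
      have bx': "bet xs' = (bet xs)(p := h - 1)"
      proof (rule ext)
        fix j
        have m1: "1 \<le> m" using False by simp
        show "bet xs' j = ((bet xs)(p := h - 1)) j" using m1 by (simp add: bet_def lx' h_def lx of_nat_diff)
      qed
      have injx: "inj (bet xs)" by (rule bet_inj[OF less.prems(1)])
      have injx': "inj (bet xs')" by (rule bet_inj[OF sxs'])
      have hn: "h - 1 \<notin> range (bet xs)"
      proof
        assume "h - 1 \<in> range (bet xs)"
        then obtain j where j: "h - 1 = bet xs j" by blast
        show False
        proof (cases "j = p")
          case True then show ?thesis using j h_def by simp
        next
          case False
          then have "bet xs' j = bet xs' p" using j bx' by simp
          then show False using injx' False by (meson injD)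
        qed
      qed
      have B': "beta_set xs' = insert (h - 1) (beta_set xs - {h})"
        unfolding beta_set_eq bx' using range_upd_inj[OF injx hn, of p] h_def by simp
      have hin: "h \<in> beta_set xs" unfolding beta_set_eq h_def by simp
      have bm: "bmaya (beta_set xs)" by (rule bmaya_beta[OF less.prems(1)])
      have hn': "h - 1 \<notin> beta_set xs - {h}" using hn unfolding beta_set_eq by simp
      have chrel: "\<And>j. chB t (beta_set xs') j = chB t (beta_set xs) j - (if h mod int t = int j then 1 else 0)
          + (if (h - 1) mod int t = int j then 1 else 0)"
        unfolding B' using chB_insert[OF bmaya_remove[OF bm] hn'] chB_remove[OF bm hin] by simp
      have dd: "diagram xs = insert (p, m - 1) (diagram xs')"
      proof -
        obtain m0 where m0: "m = Suc m0" using False by (cases m) auto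
        have "{(length ys, j) |j. j < m} = insert (length ys, m - 1) {(length ys, j) |j. j < m - 1}"
          unfolding m0 by (auto simp: less_Suc_eq)
        then show ?thesis unfolding snoc xs'_def diagram_snoc p_def by auto
      qed
      have nin: "(p, m - 1) \<notin> diagram xs'"
        unfolding xs'_def diagram_snoc p_def by (auto simp: diagram_def)
      have cont: "int (m - 1) - int p = h" using hv False by simp
      have fin: "\<And>P. finite {(r, c). (r, c) \<in> diagram xs' \<and> P r c}"
        using diagram_finite[of xs'] by (rule rev_finite_subset) auto
      have lc: "\<And>j. label_count t xs j = label_count t xs' j + (if h mod int t = int j then 1 else 0)"
      proof -
        fix j
        have "{(r, c). (r, c) \<in> diagram xs \<and> (int c - int r) mod int t = int j} =
              {(r, c). (r, c) \<in> diagram xs' \<and> (int c - int r) mod int t = int j} \<union>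
              (if h mod int t = int j then {(p, m - 1)} else {})"
          unfolding dd using cont by auto
        then show "label_count t xs j = label_count t xs' j + (if h mod int t = int j then 1 else 0)"
          unfolding label_count_def using fin[of "\<lambda>r c. (int c - int r) mod int t = int j"] nin
          by (auto simp: card_insert_if)
      qed
      have i1: "(i + 1) mod t < t" using less.prems by simp
      have md: "int ((i + 1) mod t) = (int i + 1) mod int t" by (simp add: zmod_int add.commute)
      have eqv: "(h mod int t = int ((i + 1) mod t)) = ((h - 1) mod int t = int i)"
        unfolding md modsuc using less.prems(3) by simp
      have "nvec t xs i = nvec t xs' i + (if h mod int t = int i then 1 else 0)
             - (if (h - 1) mod int t = int i then 1 else 0)"
        unfolding nvec_def lc eqv by simp
      then show ?thesis using IH[OF less.prems(3)] chrel[of i] by simp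
    qed
  qed
qed

definition Gs :: "int set \<Rightarrow> int set" where
  "Gs R = {g. g \<notin> R \<and> count_above R g > 0}"

definition qc :: "int set \<Rightarrow> nat list" where
  "qc R = rev (sort (map (count_above R) (sorted_list_of_set (Gs R))))"

lemma quotient_comp_qc: "quotient_comp t xs c = qc (beta_runner t xs c)"
  unfolding quotient_comp_def qc_def Gs_def Let_def ..

lemma cnt_fin: "bmaya R \<Longrightarrow> finite {s \<in> R. g < s}"
  by (rule bmaya_fin1')

lemma cnt_mono: assumes "bmaya R" "g \<le> g'" shows "count_above R g' \<le> count_above R g"
  unfolding count_above_def using assms(2) by (intro card_mono[OF cnt_fin[OF assms(1)]]) auto

lemma cnt_step: assumes "bmaya R" "k \<in> R" shows "count_above R (k - 1) = Suc (count_above R k)"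
proof -
  have "{s \<in> R. k - 1 < s} = insert k {s \<in> R. k < s}" using assms(2) by auto
  then show ?thesis unfolding count_above_def using cnt_fin[OF assms(1), of k] by simp
qed

lemma Gs_fin: assumes "bmaya R" shows "finite (Gs R)"
proof -
  obtain N where N: "\<forall>x. x > N \<longrightarrow> x \<notin> R" using assms unfolding bmaya_def by blast
  have "Gs R \<subseteq> {g. g \<notin> R \<and> True \<and> g < N + 1}"
  proof
    fix g assume g: "g \<in> Gs R"
    then have "{s \<in> R. g < s} \<noteq> {}" unfolding Gs_def count_above_def by (metis card.empty less_irrefl mem_Collect_eq)
    then obtain s where "s \<in> R" "g < s" by blast
    then have "s \<le> N" using N by (meson not_le)
    then show "g \<in> {g. g \<notin> R \<and> True \<and> g < N + 1}" using g \<open>g < s\<close> unfolding Gs_def by simp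
  qed
  then show ?thesis using bmaya_fin2[OF assms, of "\<lambda>_. True" "N + 1"] by (rule finite_subset)
qed

lemma mset_qc: "bmaya R \<Longrightarrow> mset (qc R) = image_mset (count_above R) (mset_set (Gs R))"
  unfolding qc_def by (simp add: mset_sl)

lemma psize_mset: "mset xs = mset ys \<Longrightarrow> psize xs = psize ys"
  unfolding psize_def by (metis sum_mset_sum_list)

lemma F_step:
  assumes R: "bmaya R"
  shows "int (card {s \<in> R. k + 1 \<le> s}) + int (card {g. g \<notin> R \<and> True \<and> g < k + 1})
       = int (card {s \<in> R. k \<le> s}) + int (card {g. g \<notin> R \<and> True \<and> g < k}) + (if k \<in> R then -1 else 1)"
proof -
  have f1: "finite {s \<in> R. True \<and> k + 1 \<le> s}" by (rule bmaya_fin1[OF R])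
  have f2: "finite {g. g \<notin> R \<and> True \<and> g < k}" by (rule bmaya_fin2[OF R])
  show ?thesis
  proof (cases "k \<in> R")
    case True
    have a: "{s \<in> R. k \<le> s} = insert k {s \<in> R. True \<and> k + 1 \<le> s}" using True by auto
    have b: "{g. g \<notin> R \<and> True \<and> g < k + 1} = {g. g \<notin> R \<and> True \<and> g < k}"
    proof (intro set_eqI)
      fix g show "g \<in> {g. g \<notin> R \<and> True \<and> g < k + 1} \<longleftrightarrow> g \<in> {g. g \<notin> R \<and> True \<and> g < k}"
        by (cases "g = k") (use True in auto)
    qed
    have c: "k \<notin> {s \<in> R. True \<and> k + 1 \<le> s}" by simp
    show ?thesis unfolding a b using f1 c True by simp
  next
    case False
    have a: "{s \<in> R. k \<le> s} = {s \<in> R. True \<and> k + 1 \<le> s}"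
    proof (intro set_eqI)
      fix g show "g \<in> {s \<in> R. k \<le> s} \<longleftrightarrow> g \<in> {s \<in> R. True \<and> k + 1 \<le> s}"
        by (cases "g = k") (use False in auto)
    qed
    have b: "{g. g \<notin> R \<and> True \<and> g < k + 1} = insert k {g. g \<notin> R \<and> True \<and> g < k}" using False by auto
    have c: "k \<notin> {g. g \<notin> R \<and> True \<and> g < k}" by simp
    show ?thesis unfolding a b using f2 c False by simp
  qed
qed

lemma F_parity:
  assumes R: "bmaya R"
  shows "even (int (card {s \<in> R. k \<le> s}) + int (card {g. g \<notin> R \<and> True \<and> g < k}) - ch R - k)"
proof -
  define F where "F k = int (card {s \<in> R. k \<le> s}) + int (card {g. g \<notin> R \<and> True \<and> g < k})" for k
  have st: "\<And>k. F (k + 1) = F k + (if k \<in> R then -1 else 1)" unfolding F_def by (rule F_step[OF R])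
  have base: "even (F 0 - ch R)"
  proof -
    have e1: "{x \<in> R. x mod int 1 = int 0 \<and> 0 \<le> x} = {s \<in> R. 0 \<le> s}" by simp
    have e2: "{x. x \<notin> R \<and> x mod int 1 = int 0 \<and> x < 0} = {g. g \<notin> R \<and> True \<and> g < 0}" by simp
    show ?thesis unfolding F_def ch_def chB_def e1 e2 by simp
  qed
  have A: "even (F k - F 0 - k)"
  proof (induction k rule: int_induct[where k = 0])
    case base then show ?case by simp
  next
    case (step1 i)
    then show ?case using st[of i] by (cases "i \<in> R") auto
  next
    case (step2 i)
    then show ?case using st[of "i - 1"] by (cases "i - 1 \<in> R") auto
  qed
  have "even ((F k - F 0 - k) + (F 0 - ch R))" by (rule dvd_add[OF A base])
  moreover have "F k - ch R - k = (F k - F 0 - k) + (F 0 - ch R)" by simp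
  ultimately have "even (F k - ch R - k)" by metis
  then show ?thesis by (simp only: F_def)
qed

lemma qc_step:
  assumes R: "bmaya R" and k: "k \<in> R" and k1: "k - 1 \<notin> R"
  defines "R' \<equiv> insert (k - 1) (R - {k})"
  shows "psize (qc R) = Suc (psize (qc R'))"
    and "srank (qc R) mod 4 = (srank (qc R') + (if odd (k + ch R) then 2 else 0)) mod 4"
    and "ch R' = ch R" and "bmaya R'"
proof -
  show bR': "bmaya R'" unfolding R'_def by (intro bmaya_insert bmaya_remove R)
  define cnt where "cnt = count_above R"
  define m where "m = cnt (k - 1)"
  have mk: "m = Suc (cnt k)" unfolding m_def cnt_def by (rule cnt_step[OF R k])
  define G0 where "G0 = Gs R - {k - 1}"
  have finG: "finite (Gs R)" by (rule Gs_fin[OF R])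
  have finG0: "finite G0" unfolding G0_def using finG by simp
  have km1G: "k - 1 \<in> Gs R" unfolding Gs_def using k1 mk by (simp add: m_def cnt_def)
  have GR: "Gs R = insert (k - 1) G0" unfolding G0_def using km1G by auto
  have kG0: "k \<notin> G0" unfolding G0_def Gs_def using k by simp
  have k1G0: "k - 1 \<notin> G0" unfolding G0_def by simp
  have cntR': "\<And>g. g \<notin> R \<Longrightarrow> g \<noteq> k - 1 \<Longrightarrow> count_above R' g = cnt g"
  proof -
    fix g assume g: "g \<notin> R" "g \<noteq> k - 1"
    show "count_above R' g = cnt g"
    proof (cases "g < k - 1")
      case True
      have "{s \<in> R'. g < s} = insert (k - 1) ({s \<in> R. g < s} - {k})" unfolding R'_def using True k1 by auto
      moreover have fA: "finite {s \<in> R. g < s}" by (rule cnt_fin[OF R])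
      moreover have kA: "k \<in> {s \<in> R. g < s}" using True k by simp
      moreover have "k - 1 \<notin> {s \<in> R. g < s} - {k}" using k1 by simp
      ultimately have "card {s \<in> R'. g < s} = Suc (card ({s \<in> R. g < s} - {k}))" by simp
      also have "\<dots> = card {s \<in> R. g < s}" using card.remove[OF fA kA] by simp
      finally show ?thesis unfolding count_above_def cnt_def .
    next
      case False
      have "g \<noteq> k" using g k by auto
      then have "g > k" using g(2) False by linarith
      then have "{s \<in> R'. g < s} = {s \<in> R. g < s}" unfolding R'_def by auto
      then show ?thesis unfolding count_above_def cnt_def by simp
    qed
  qed
  have cntR'k: "count_above R' k = cnt k"
  proof -
    have "{s \<in> R'. k < s} = {s \<in> R. k < s}" unfolding R'_def by auto
    then show ?thesis unfolding count_above_def cnt_def by simp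
  qed
  have GR': "Gs R' = G0 \<union> (if cnt k > 0 then {k} else {})"
  proof (intro set_eqI iffI)
    fix g assume g: "g \<in> Gs R'"
    show "g \<in> G0 \<union> (if cnt k > 0 then {k} else {})"
    proof (cases "g = k")
      case True then show ?thesis using g cntR'k unfolding Gs_def by simp
    next
      case False
      then have "g \<notin> R" "g \<noteq> k - 1" using g unfolding Gs_def R'_def by auto
      then show ?thesis using g cntR' unfolding Gs_def G0_def cnt_def by auto
    qed
  next
    fix g assume g: "g \<in> G0 \<union> (if cnt k > 0 then {k} else {})"
    show "g \<in> Gs R'"
    proof (cases "g = k")
      case True then show ?thesis using g kG0 cntR'k k1 unfolding Gs_def R'_def by (auto split: if_splits)
    next
      case False
      then have g0: "g \<in> G0" using g by (auto split: if_splits)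
      then have "g \<notin> R" "g \<noteq> k - 1" unfolding G0_def Gs_def by auto
      then show ?thesis using g0 cntR' False unfolding Gs_def G0_def R'_def cnt_def by auto
    qed
  qed
  define ys where "ys = map cnt (sorted_list_of_set G0)"
  have msG0: "image_mset cnt (mset_set G0) = mset ys" unfolding ys_def by (simp add: mset_sl)
  have M1: "mset (qc R) = mset (m # ys)"
    unfolding mset_qc[OF R] GR using finG0 k1G0 msG0 by (simp add: m_def cnt_def)
  have img': "image_mset (count_above R') (mset_set G0) = image_mset cnt (mset_set G0)"
  proof (rule image_mset_cong)
    fix g assume "g \<in># mset_set G0"
    then have "g \<in> G0" using finG0 by simp
    then show "count_above R' g = cnt g" using cntR' unfolding G0_def Gs_def by auto
  qed
  have M2: "srank (qc R') = srank ((m - 1) # ys) \<and> psize (qc R') = psize ((m - 1) # ys)"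
  proof (cases "cnt k > 0")
    case True
    have "mset (qc R') = mset ((m - 1) # ys)"
      unfolding mset_qc[OF bR'] GR' using True finG0 kG0 img' msG0 cntR'k mk by simp
    then show ?thesis using srank_mset psize_mset by blast
  next
    case False
    have "mset (qc R') = mset ys"
      unfolding mset_qc[OF bR'] GR' using False finG0 img' msG0 by simp
    moreover have "m - 1 = 0" using False mk by simp
    ultimately show ?thesis using srank_mset[of "qc R'" ys] psize_mset[of "qc R'" ys] srank_zero[of ys]
      by (simp add: psize_def)
  qed
  show "psize (qc R) = Suc (psize (qc R'))"
    using psize_mset[OF M1] M2 mk by (simp add: psize_def)
  define p where "p = length (filter (\<lambda>y. m \<le> y) ys)"
  have p1: "p = card {g \<in> G0. m \<le> cnt g}"
    unfolding p_def ys_def filter_map length_map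
    using distinct_length_filter[of "sorted_list_of_set G0" "\<lambda>g. m \<le> cnt g"] finG0
    by (simp add: Int_def conj_commute o_def)
  have p2: "{g \<in> G0. m \<le> cnt g} = {g. g \<notin> R \<and> True \<and> g < k - 1}"
  proof (intro set_eqI iffI)
    fix g assume g: "g \<in> {g \<in> G0. m \<le> cnt g}"
    then have gR: "g \<notin> R" "g \<noteq> k - 1" unfolding G0_def Gs_def by auto
    have "\<not> g > k - 1"
    proof
      assume "g > k - 1"
      moreover have "g \<noteq> k" using gR k by auto
      ultimately have "g > k" using gR(2) by linarith
      then have "cnt g \<le> cnt k" unfolding cnt_def by (intro cnt_mono[OF R]) simp
      then show False using g mk by simp
    qed
    then show "g \<in> {g. g \<notin> R \<and> True \<and> g < k - 1}" using gR by simp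
  next
    fix g assume g: "g \<in> {g. g \<notin> R \<and> True \<and> g < k - 1}"
    then have "cnt (k - 1) \<le> cnt g" unfolding cnt_def by (intro cnt_mono[OF R]) simp
    then have "m \<le> cnt g" unfolding m_def .
    moreover then have "g \<in> Gs R" unfolding Gs_def using g mk by (simp add: cnt_def)
    ultimately show "g \<in> {g \<in> G0. m \<le> cnt g}" using g unfolding G0_def by simp
  qed
  have m2: "m = card {s \<in> R. k \<le> s}"
  proof -
    have "{s \<in> R. k - 1 < s} = {s \<in> R. k \<le> s}" by auto
    then show ?thesis unfolding m_def cnt_def count_above_def by simp
  qed
  have q2: "card {g. g \<notin> R \<and> True \<and> g < k} = Suc (card {g. g \<notin> R \<and> True \<and> g < k - 1})"
  proof -
    have "{g. g \<notin> R \<and> True \<and> g < k} = insert (k - 1) {g. g \<notin> R \<and> True \<and> g < k - 1}" using k1 by auto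
    then show ?thesis using bmaya_fin2[OF R, of "\<lambda>_. True" "k - 1"] by simp
  qed
  have par: "even (int m + int p) = odd (k + ch R)"
  proof -
    have e: "int m + int p = int (card {s \<in> R. k \<le> s}) + int (card {g. g \<notin> R \<and> True \<and> g < k - 1})"
      unfolding p1 unfolding p2 unfolding m2 ..
    have f: "even (int (card {s \<in> R. k \<le> s}) + int (Suc (card {g. g \<notin> R \<and> True \<and> g < k - 1})) - ch R - k)"
      using F_parity[OF R, of k] unfolding q2 .
    show ?thesis unfolding e using f by presburger
  qed
  have dec: "(srank (m # ys) - srank ((m - 1) # ys)) mod 4 = (if even (m + p) then 2 else 0)"
    using srank_dec[of m ys] mk unfolding p_def by simp
  have s1: "srank (qc R) = srank (m # ys)" by (rule srank_mset[OF M1])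
  have s2: "srank (qc R') = srank ((m - 1) # ys)" using M2 by simp
  have ev: "even (m + p) = odd (k + ch R)" using par by simp
  have "srank (qc R) mod 4 = ((srank (qc R) - srank (qc R')) mod 4 + srank (qc R')) mod 4"
    by (metis diff_add_cancel mod_add_left_eq)
  also have "\<dots> = ((if odd (k + ch R) then 2 else 0) + srank (qc R')) mod 4"
    unfolding s1 s2 dec ev ..
  finally show "srank (qc R) mod 4 = (srank (qc R') + (if odd (k + ch R) then 2 else 0)) mod 4"
    by (simp add: add.commute)
  show "ch R' = ch R"
  proof -
    have "k - 1 \<notin> R - {k}" using k1 by simp
    then have "ch R' = ch (R - {k}) + 1" unfolding R'_def ch_def
      using chB_insert[OF bmaya_remove[OF R], of "k - 1" k 1 0] by simp
    also have "\<dots> = ch R" unfolding ch_def using chB_remove[OF R k, of 1 0] by simp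
    finally show ?thesis .
  qed
qed

lemma part_sorted: "is_partition xs \<Longrightarrow> sorted_wrt (\<ge>) xs"
  unfolding is_partition_def by simp

lemma rtrancl_cross:
  assumes "(a, b) \<in> R\<^sup>*" "P a" "\<not> P b"
  shows "\<exists>x y. (x, y) \<in> R \<and> P x \<and> \<not> P y"
  using assms
proof (induction rule: rtrancl_induct)
  case base then show ?case by simp
next
  case (step y z)
  then show ?case by (cases "P y") auto
qed

lemma telescope:
  assumes "\<And>i. r \<le> i \<Longrightarrow> i < s \<Longrightarrow> g i + 1 = l (Suc i)" "r \<le> s"
  shows "(\<Sum>i\<in>{r..s}. int (l i) - int (g i)) = int (l r) - int (g s) + int s - int r"
  using assms
proof (induction s)
  case 0 then show ?case by simp
next
  case (Suc s)
  show ?case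
  proof (cases "r = Suc s")
    case True then show ?thesis by simp
  next
    case False
    then have rs: "r \<le> s" using Suc.prems(2) by simp
    have IH: "(\<Sum>i\<in>{r..s}. int (l i) - int (g i)) = int (l r) - int (g s) + int s - int r"
      using Suc.IH Suc.prems(1) rs by simp
    have gs: "g s + 1 = l (Suc s)" using Suc.prems(1)[of s] rs by simp
    have "{r..Suc s} = insert (Suc s) {r..s}" using rs by auto
    then have "(\<Sum>i\<in>{r..Suc s}. int (l i) - int (g i)) = (int (l (Suc s)) - int (g (Suc s))) + (\<Sum>i\<in>{r..s}. int (l i) - int (g i))"
      by simp
    then show ?thesis unfolding IH using gs by simp
  qed
qed

lemma card_H:
  assumes le: "\<And>i. g i \<le> l i" and rows: "\<And>i. g i < l i \<Longrightarrow> r \<le> i \<and> i \<le> s" and rs: "(r::nat) \<le> s"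
  shows "{(i, j). j < l i} - {(i, j). j < g i} = Sigma {r..s} (\<lambda>i. {g i..<l i})"
    and "card ({(i, j). j < l i} - {(i, j). j < g i}) = (\<Sum>i\<in>{r..s}. l i - g i)"
proof -
  show e: "{(i, j). j < l i} - {(i, j). j < g i} = Sigma {r..s} (\<lambda>i. {g i..<l i})"
  proof (intro set_eqI iffI)
    fix p assume p: "p \<in> {(i, j). j < l i} - {(i, j). j < g i}"
    obtain i j where ij: "p = (i, j)" by fastforce
    have "g i \<le> j" "j < l i" using p ij by auto
    then show "p \<in> Sigma {r..s} (\<lambda>i. {g i..<l i})" using rows[of i] ij by simp
  next
    fix p assume p: "p \<in> Sigma {r..s} (\<lambda>i. {g i..<l i})"
    then show "p \<in> {(i, j). j < l i} - {(i, j). j < g i}" by auto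
  qed
  show "card ({(i, j). j < l i} - {(i, j). j < g i}) = (\<Sum>i\<in>{r..s}. l i - g i)"
    unfolding e by (subst card_SigmaI) auto
qed

lemma card_ioc: "card {x::int. a < x \<and> x \<le> a + int n} = n"
proof -
  have "{x::int. a < x \<and> x \<le> a + int n} = {a<..a + int n}" by auto
  then show ?thesis by simp
qed

lemma oc_parity: "odd (i + j) = odd (int j - int i)"
  by presburger

lemma img_filter: "(\<And>p. P p = Q (f p)) \<Longrightarrow> f ` {p \<in> A. P p} = {x \<in> f ` A. Q x}"
  by auto

lemma decode:
  assumes rh: "rim_hook_removal t xs ys" and t: "t \<ge> 1"
  shows "\<exists>b. b \<in> beta_set xs \<and> b - int t \<notin> beta_set xs
           \<and> beta_set ys = insert (b - int t) (beta_set xs - {b})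
           \<and> oc xs = oc ys + card {x. b - int t < x \<and> x \<le> b \<and> odd x}"
proof -
  have px: "is_partition xs" and py: "is_partition ys" and sub: "diagram ys \<subseteq> diagram xs"
    and cH: "card (diagram xs - diagram ys) = t" and con: "cells_connected (diagram xs - diagram ys)"
    and n22: "no_2x2 (diagram xs - diagram ys)"
    using rh unfolding rim_hook_removal_def by auto
  have sx: "sorted_wrt (\<ge>) xs" and sy: "sorted_wrt (\<ge>) ys" using px py by (auto simp: part_sorted)
  define l where "l = lam xs"
  define g where "g = lam ys"
  define H where "H = diagram xs - diagram ys"
  have Dx: "diagram xs = {(i, j). j < l i}" unfolding l_def by (rule diagram_lam)
  have Dy: "diagram ys = {(i, j). j < g i}" unfolding g_def by (rule diagram_lam)
  have le: "\<And>i. g i \<le> l i"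
  proof (rule ccontr)
    fix i assume "\<not> g i \<le> l i"
    then have "(i, l i) \<in> diagram ys" unfolding Dy by simp
    then show False using sub unfolding Dx by auto
  qed
  have Hc: "H = {(i, j). g i \<le> j \<and> j < l i}" unfolding H_def Dx Dy by auto
  have finH: "finite H" unfolding H_def using diagram_finite[of xs] by simp
  have Hne: "H \<noteq> {}" using cH t finH unfolding H_def[symmetric] by auto
  define Rw where "Rw = {i. g i < l i}"
  have RwH: "\<And>i. i \<in> Rw \<longleftrightarrow> (i, g i) \<in> H" unfolding Rw_def Hc by auto
  have finRw: "finite Rw"
  proof -
    have "Rw \<subseteq> {..<length xs}" unfolding Rw_def l_def lam_def by (auto split: if_splits)
    then show ?thesis by (rule finite_subset) simp
  qed
  have Rwne: "Rw \<noteq> {}"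
  proof -
    obtain i j where "(i, j) \<in> H" using Hne by auto
    then have "i \<in> Rw" unfolding Hc Rw_def by auto
    then show ?thesis by auto
  qed
  define r where "r = Min Rw"
  define s where "s = Max Rw"
  have rR: "r \<in> Rw" unfolding r_def using finRw Rwne by simp
  have sR: "s \<in> Rw" unfolding s_def using finRw Rwne by simp
  have rows: "\<And>i. g i < l i \<Longrightarrow> r \<le> i \<and> i \<le> s"
    unfolding r_def s_def using finRw by (simp add: Rw_def)
  have rs: "r \<le> s" using rows[of r] rR unfolding Rw_def by simp
  have outside: "\<And>i. i < r \<or> s < i \<Longrightarrow> g i = l i"
    using rows le by (meson le_neq_implies_less not_le)
  have mid: "\<And>i. r \<le> i \<Longrightarrow> i < s \<Longrightarrow> g i + 1 = l (Suc i)"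
  proof -
    fix i assume ri: "r \<le> i" and isl: "i < s"
    have p0: "(r, g r) \<in> H" using rR RwH by simp
    have q0: "(s, g s) \<in> H" using sR RwH by simp
    have "((r, g r), (s, g s)) \<in> (cell_adj H)\<^sup>*" using con p0 q0 unfolding cells_connected_def H_def by blast
    then obtain x y where xy: "(x, y) \<in> cell_adj H" "fst x \<le> i" "\<not> fst y \<le> i"
      using rtrancl_cross[of "(r, g r)" "(s, g s)" "cell_adj H" "\<lambda>p. fst p \<le> i"] ri isl by auto
    have xH: "x \<in> H" and yH: "y \<in> H" and adj: "(fst x = fst y \<and> (snd y = snd x + 1 \<or> snd x = snd y + 1)) \<or>
      (snd x = snd y \<and> (fst y = fst x + 1 \<or> fst x = fst y + 1))"
      using xy(1) unfolding cell_adj_def by auto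
    have fx: "fst x = i" and fy: "fst y = Suc i" and sxy: "snd x = snd y" using adj xy(2,3) by auto
    define j where "j = snd x"
    have c1: "g i \<le> j" using xH fx unfolding Hc j_def by (cases x) auto
    have c2: "j < l (Suc i)" using yH fy sxy unfolding Hc j_def by (cases y) auto
    have gle: "g (Suc i) \<le> g i" unfolding g_def by (rule lam_anti[OF sy]) simp
    have lle: "l (Suc i) \<le> l i" unfolding l_def by (rule lam_anti[OF sx]) simp
    show "g i + 1 = l (Suc i)"
    proof (rule ccontr)
      assume "g i + 1 \<noteq> l (Suc i)"
      then have big: "g i + 1 < l (Suc i)" using c1 c2 by simp
      have "(i, g i) \<in> H" "(i + 1, g i) \<in> H" "(i, g i + 1) \<in> H" "(i + 1, g i + 1) \<in> H"
        unfolding Hc using big gle lle by auto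
      then show False using n22 unfolding no_2x2_def H_def by blast
    qed
  qed
  have cardsum: "card H = (\<Sum>i\<in>{r..s}. l i - g i)"
    unfolding H_def Dx Dy by (rule card_H(2)[OF le rows rs])
  have "int (card H) = (\<Sum>i\<in>{r..s}. int (l i) - int (g i))"
    unfolding cardsum using le by (simp add: of_nat_diff)
  also have "\<dots> = int (l r) - int (g s) + int s - int r" by (rule telescope[where g=g and l=l, OF mid rs])
  finally have gs: "int (g s) = int (l r) + int s - int r - int t" using cH unfolding H_def by simp
  define b where "b = bet xs r"
  have bys: "bet ys s = b - int t" unfolding b_def bet_def using gs by (simp add: g_def l_def)
  have bmid: "\<And>i. r \<le> i \<Longrightarrow> i < s \<Longrightarrow> bet ys i = bet xs (Suc i)"
    unfolding bet_def using mid by (simp add: g_def l_def) (metis add.commute of_nat_Suc diff_diff_eq2 diff_add_cancel add_diff_cancel_left' diff_diff_add)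
  have bout: "\<And>i. i < r \<or> s < i \<Longrightarrow> bet ys i = bet xs i"
    unfolding bet_def using outside by (simp add: g_def l_def)
  have injx: "inj (bet xs)" by (rule bet_inj[OF sx])
  have injy: "inj (bet ys)" by (rule bet_inj[OF sy])
  have bin: "b \<in> beta_set xs" unfolding beta_set_eq b_def by simp
  have bnot: "b - int t \<notin> beta_set xs"
  proof
    assume "b - int t \<in> beta_set xs"
    then obtain i where i: "bet xs i = b - int t" unfolding beta_set_eq by auto
    have "i \<noteq> r" using i t unfolding b_def by auto
    show False
    proof (cases "i < r \<or> s < i")
      case True
      then have "bet ys i = bet ys s" using bout i bys by simp
      then have "i = s" using injy by (meson injD)
      then show False using True rs by simp
    next
      case False
      then have "r < i" "i \<le> s" using \<open>i \<noteq> r\<close> by auto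
      then have "bet ys (i - 1) = bet xs i" using bmid[of "i - 1"] by simp
      then have "bet ys (i - 1) = bet ys s" using i bys by simp
      then have "i - 1 = s" using injy by (meson injD)
      then show False using \<open>r < i\<close> \<open>i \<le> s\<close> by simp
    qed
  qed
  have Bys: "beta_set ys = insert (b - int t) (beta_set xs - {b})"
  proof (intro set_eqI iffI)
    fix x assume "x \<in> beta_set ys"
    then obtain i where i: "x = bet ys i" unfolding beta_set_eq by auto
    show "x \<in> insert (b - int t) (beta_set xs - {b})"
    proof (cases "i < r \<or> s < i")
      case True
      then have "x = bet xs i" "i \<noteq> r" using i bout rs by auto
      then have "x \<noteq> b" using injx unfolding b_def by (meson injD)
      then show ?thesis using \<open>x = bet xs i\<close> unfolding beta_set_eq by simp
    next
      case False
      show ?thesis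
      proof (cases "i = s")
        case True then show ?thesis using i bys by simp
      next
        case False
        then have "r \<le> i" "i < s" using \<open>\<not> (i < r \<or> s < i)\<close> by auto
        then have "x = bet xs (Suc i)" using i bmid by simp
        moreover have "x \<noteq> b" using injx \<open>r \<le> i\<close> calculation unfolding b_def by (metis injD Suc_n_not_le_n)
        ultimately show ?thesis unfolding beta_set_eq by simp
      qed
    qed
  next
    fix x assume x: "x \<in> insert (b - int t) (beta_set xs - {b})"
    show "x \<in> beta_set ys"
    proof (cases "x = b - int t")
      case True then show ?thesis unfolding beta_set_eq using bys by (metis rangeI)
    next
      case False
      then obtain i where i: "x = bet xs i" "i \<noteq> r" using x unfolding beta_set_eq b_def by auto
      show ?thesis
      proof (cases "i < r \<or> s < i")
        case True
        then show ?thesis using i bout unfolding beta_set_eq by (metis rangeI)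
      next
        case False
        then have "r < i" "i \<le> s" using i by auto
        then have "bet ys (i - 1) = x" using bmid[of "i - 1"] i by simp
        then show ?thesis unfolding beta_set_eq by (metis rangeI)
      qed
    qed
  qed
  define cf where "cf = (\<lambda>p::nat \<times> nat. int (snd p) - int (fst p))"
  define I where "I = {x. b - int t < x \<and> x \<le> b}"
  have bxle: "\<And>i j. i \<le> j \<Longrightarrow> bet xs j \<le> bet xs i"
    using bet_strict[OF sx] by (metis le_less order_refl)
  have byle: "\<And>i j. i \<le> j \<Longrightarrow> bet ys j \<le> bet ys i"
    using bet_strict[OF sy] by (metis le_less order_refl)
  have cfI: "cf ` H \<subseteq> I"
  proof
    fix x assume "x \<in> cf ` H"
    then obtain i j where ij: "(i, j) \<in> H" "x = int j - int i" unfolding cf_def by auto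
    have a: "g i \<le> j" "j < l i" using ij(1) unfolding Hc by auto
    then have ri: "r \<le> i" "i \<le> s" using rows[of i] by auto
    have "x \<le> bet xs i" using a ij unfolding bet_def l_def by simp
    also have "\<dots> \<le> b" unfolding b_def using bxle ri by simp
    finally have u: "x \<le> b" .
    have "b - int t = bet ys s" using bys by simp
    also have "\<dots> \<le> bet ys i" using byle ri by simp
    also have "\<dots> < x" using a ij unfolding bet_def g_def by simp
    finally show "x \<in> I" unfolding I_def using u by simp
  qed
  have injcf: "inj_on cf H"
  proof
    fix p q assume p: "p \<in> H" and q: "q \<in> H" and e: "cf p = cf q"
    obtain i j where pij: "p = (i, j)" by fastforce
    obtain i' j' where qij: "q = (i', j')" by fastforce
    have key: "\<And>i j i' j'. (i, j) \<in> H \<Longrightarrow> (i', j') \<in> H \<Longrightarrow> i < i' \<Longrightarrow> int j' - int i' < int j - int i"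
    proof -
      fix i j i' j' assume h1: "(i, j) \<in> H" and h2: "(i', j') \<in> H" and ii: "i < i'"
      have a: "g i \<le> j" using h1 unfolding Hc by auto
      have a': "j' < l i'" using h2 unfolding Hc by auto
      have "i' \<le> s" using rows[of i'] h2 unfolding Hc by auto
      then have isl: "i < s" using ii by simp
      have ri: "r \<le> i" using rows[of i] h1 unfolding Hc by auto
      have "int j' - int i' \<le> bet xs i'" using a' unfolding bet_def l_def by simp
      also have "\<dots> \<le> bet xs (Suc i)" using bxle ii by simp
      also have "\<dots> = int (g i) - int i - 1" unfolding bet_def using mid[OF ri isl] by (simp add: l_def)
      also have "\<dots> < int j - int i" using a by simp
      finally show "int j' - int i' < int j - int i" .
    qed
    show "p = q"
    proof (cases "i = i'")
      case True then show ?thesis using e pij qij unfolding cf_def by simp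
    next
      case False
      then have "i < i' \<or> i' < i" by auto
      then show ?thesis using key[of i j i' j'] key[of i' j' i j] p q e pij qij unfolding cf_def by auto
    qed
  qed
  have cardI: "card I = t"
  proof -
    have "I = {x. (b - int t) < x \<and> x \<le> (b - int t) + int t}" unfolding I_def by simp
    then show ?thesis using card_ioc[of "b - int t" t] by simp
  qed
  have imgI: "cf ` H = I"
  proof (rule card_subset_eq)
    show "finite I" unfolding I_def by (rule finite_subset[of _ "{b - int t<..b}"]) auto
    show "cf ` H \<subseteq> I" by (rule cfI)
    show "card (cf ` H) = card I" using card_image[OF injcf] cH cardI unfolding H_def by simp
  qed
  have ocH: "card {p \<in> H. odd (fst p + snd p)} = card {x \<in> I. odd x}"
  proof -
    have "card {p \<in> H. odd (fst p + snd p)} = card (cf ` {p \<in> H. odd (fst p + snd p)})"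
      by (rule card_image[symmetric]) (rule inj_on_subset[OF injcf], auto)
    also have "cf ` {p \<in> H. odd (fst p + snd p)} = {x \<in> I. odd x}"
    proof -
      have "cf ` {p \<in> H. odd (fst p + snd p)} = {x \<in> cf ` H. odd x}"
      proof (rule img_filter)
        fix p :: "nat \<times> nat" show "odd (fst p + snd p) = odd (cf p)" unfolding cf_def by (rule oc_parity)
      qed
      then show ?thesis unfolding imgI .
    qed
    finally show ?thesis .
  qed
  have ocsplit: "oc xs = oc ys + card {p \<in> H. odd (fst p + snd p)}"
  proof -
    have "{(i, j). (i, j) \<in> diagram xs \<and> odd (i + j)} = {(i, j). (i, j) \<in> diagram ys \<and> odd (i + j)} \<union> {p \<in> H. odd (fst p + snd p)}"
      unfolding H_def using sub by auto
    moreover have "finite {(i, j). (i, j) \<in> diagram ys \<and> odd (i + j)}"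
      using diagram_finite[of ys] by (rule rev_finite_subset) auto
    moreover have "finite {p \<in> H. odd (fst p + snd p)}" using finH by simp
    moreover have "{(i, j). (i, j) \<in> diagram ys \<and> odd (i + j)} \<inter> {p \<in> H. odd (fst p + snd p)} = {}"
      unfolding H_def by auto
    ultimately show ?thesis unfolding oc_def by (simp add: card_Un_disjoint)
  qed
  show ?thesis
    apply (rule exI[of _ b])
    using bin bnot Bys ocsplit ocH unfolding I_def by simp
qed

lemma mk_part:
  assumes anti: "\<And>i. f (Suc i) \<le> f i" and z: "f n = 0"
  defines "L \<equiv> (LEAST i. f i = 0)"
  shows "is_partition (map f [0..<L]) \<and> lam (map f [0..<L]) = f"
proof -
  have ex: "f L = 0" unfolding L_def using z by (rule LeastI)
  have pos: "\<And>i. i < L \<Longrightarrow> 0 < f i" unfolding L_def using not_less_Least by blast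
  have am: "\<And>i j. i \<le> j \<Longrightarrow> f j \<le> f i"
    using anti by (metis lift_Suc_antimono_le)
  have zero: "\<And>i. L \<le> i \<Longrightarrow> f i = 0" using am ex by (metis le_zero_eq)
  have srt: "sorted_wrt (\<ge>) (map f [0..<L])"
    unfolding sorted_wrt_iff_nth_less using am by simp
  have nz: "0 \<notin> set (map f [0..<L])"
  proof
    assume "0 \<in> set (map f [0..<L])"
    then obtain x where "x < L" "f x = 0" by auto
    then show False using pos[of x] by simp
  qed
  have l: "lam (map f [0..<L]) = f"
  proof
    fix i show "lam (map f [0..<L]) i = f i"
      unfolding lam_def using zero[of i] by auto
  qed
  show ?thesis unfolding is_partition_def using srt nz l by simp
qed

lemma cadj: "x \<in> H \<Longrightarrow> y \<in> H \<Longrightarrow> (fst x = fst y \<and> (snd y = snd x + 1 \<or> snd x = snd y + 1)) \<or>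
      (snd x = snd y \<and> (fst y = fst x + 1 \<or> fst x = fst y + 1)) \<Longrightarrow> (x, y) \<in> cell_adj H"
  unfolding cell_adj_def by simp

lemma cadj_sym: "sym (cell_adj H)"
  unfolding sym_def cell_adj_def by auto

lemma encode:
  assumes px: "is_partition xs" and t: "t \<ge> 1" and bin: "b \<in> beta_set xs" and bnot: "b - int t \<notin> beta_set xs"
  shows "\<exists>ys. rim_hook_removal t xs ys"
proof -
  have sx: "sorted_wrt (\<ge>) xs" by (rule part_sorted[OF px])
  define l where "l = lam xs"
  obtain r where br: "b = bet xs r" using bin unfolding beta_set_eq by auto
  define S where "S = {i. bet xs i > b - int t}"
  have finS: "finite S"
  proof -
    have "S \<subseteq> {..< nat (bet xs 0 - (b - int t))}"
    proof
      fix i assume "i \<in> S"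
      then have "bet xs i > b - int t" unfolding S_def by simp
      moreover have "bet xs i \<le> bet xs 0 - int i" by (rule bet_le[OF sx])
      ultimately show "i \<in> {..< nat (bet xs 0 - (b - int t))}" by simp
    qed
    then show ?thesis by (rule finite_subset) simp
  qed
  have rS: "r \<in> S" unfolding S_def using br t by simp
  define s where "s = Max S"
  have sS: "s \<in> S" unfolding s_def using finS rS by (metis Max_in empty_iff)
  have rs: "r \<le> s" unfolding s_def using finS rS by simp
  have bs: "bet xs s > b - int t" using sS unfolding S_def by simp
  have bs1: "bet xs (Suc s) < b - int t"
  proof -
    have "Suc s \<notin> S" unfolding s_def using finS by (metis Max_ge Suc_n_not_le_n)
    then have "bet xs (Suc s) \<le> b - int t" unfolding S_def by simp
    moreover have "bet xs (Suc s) \<noteq> b - int t" using bnot unfolding beta_set_eq by (metis rangeI)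
    ultimately show ?thesis by simp
  qed
  have slen: "s < length xs"
  proof (rule ccontr)
    assume "\<not> s < length xs"
    then have "bet xs s = - int s - 1" "bet xs (Suc s) = - int s - 2"
      unfolding bet_def lam_def by auto
    then show False using bs bs1 by simp
  qed
  have lpos: "\<And>i. i \<le> s \<Longrightarrow> 1 \<le> l i" unfolding l_def using lam_pos[OF px] slen
    by (metis One_nat_def Suc_leI le_less_trans)
  have lanti: "\<And>i j. i \<le> j \<Longrightarrow> l j \<le> l i" unfolding l_def by (rule lam_anti[OF sx])
  define v where "v = b - int t + int s + 1"
  have v0: "0 \<le> v" using bs1 unfolding v_def bet_def by simp
  have vl: "nat v < l s" using bs v0 unfolding v_def bet_def l_def by simp
  have vl1: "l (Suc s) \<le> nat v" using bs1 v0 unfolding v_def bet_def l_def by simp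
  define f where "f i = (if i < r then l i else if i < s then l (Suc i) - 1 else if i = s then nat v else l i)" for i
  have F1: "\<And>i. f i \<le> l i"
    unfolding f_def using lanti vl by (auto simp: le_diff_conv) (meson le_Suc_eq le_trans lanti order_refl)
  have F4a: "\<And>i. r \<le> i \<Longrightarrow> i \<le> s \<Longrightarrow> f i < l i"
  proof -
    fix i assume a: "r \<le> i" "i \<le> s"
    show "f i < l i"
    proof (cases "i < s")
      case True
      have "1 \<le> l (Suc i)" using lpos True by simp
      moreover have "l (Suc i) \<le> l i" using lanti by simp
      ultimately show ?thesis unfolding f_def using a True by simp
    next
      case False then have "i = s" using a by simp
      then show ?thesis unfolding f_def using vl a by simp
    qed
  qed
  have F4b: "\<And>i. i < r \<or> s < i \<Longrightarrow> f i = l i" unfolding f_def using rs by auto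
  have rows: "\<And>i. f i < l i \<Longrightarrow> r \<le> i \<and> i \<le> s" using F4b by (metis less_irrefl not_le)
  have F5: "\<And>i. r \<le> i \<Longrightarrow> i < s \<Longrightarrow> f i + 1 = l (Suc i)"
  proof -
    fix i assume a: "r \<le> i" "i < s"
    have "1 \<le> l (Suc i)" using lpos a by simp
    then show "f i + 1 = l (Suc i)" unfolding f_def using a by simp
  qed
  have F2: "\<And>i. f (Suc i) \<le> f i"
  proof -
    fix i
    consider "Suc i < r" | "Suc i = r" | "r \<le> i \<and> Suc i < s" | "r \<le> i \<and> Suc i = s" | "i = s" | "s < i" by linarith
    then show "f (Suc i) \<le> f i"
    proof cases
      case 1 then show ?thesis unfolding f_def using lanti by simp
    next
      case 2 then have "f (Suc i) \<le> l (Suc i)" using F1 by simp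
      also have "\<dots> \<le> l i" using lanti by simp
      finally show ?thesis unfolding f_def using 2 by simp
    next
      case 3 then show ?thesis unfolding f_def using lanti[of "Suc i" "Suc (Suc i)"] by simp
    next
      case 4 then show ?thesis unfolding f_def using vl by simp
    next
      case 5 then show ?thesis unfolding f_def using vl1 rs by simp
    next
      case 6 then show ?thesis unfolding f_def using lanti rs by simp
    qed
  qed
  have F3: "f (length xs) = 0" unfolding f_def l_def lam_def using slen rs by simp
  define ys where "ys = map f [0..<(LEAST i. f i = 0)]"
  have py: "is_partition ys" and ly: "lam ys = f" using mk_part[OF F2 F3] unfolding ys_def by auto
  have Dx: "diagram xs = {(i, j). j < l i}" unfolding l_def by (rule diagram_lam)
  have Dy: "diagram ys = {(i, j). j < f i}" unfolding ly[symmetric] by (rule diagram_lam)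
  have sub: "diagram ys \<subseteq> diagram xs" unfolding Dx Dy using F1 by (auto intro: less_le_trans)
  define H where "H = diagram xs - diagram ys"
  have Hc: "\<And>i j. (i, j) \<in> H \<longleftrightarrow> f i \<le> j \<and> j < l i" unfolding H_def Dx Dy by auto
  have cH: "card H = t"
  proof -
    have "card H = (\<Sum>i\<in>{r..s}. l i - f i)" unfolding H_def Dx Dy by (rule card_H(2)[OF F1 rows rs])
    then have "int (card H) = (\<Sum>i\<in>{r..s}. int (l i) - int (f i))" using F1 by (simp add: of_nat_diff)
    also have "\<dots> = int (l r) - int (f s) + int s - int r" by (rule telescope[where g=f and l=l, OF F5 rs])
    also have "\<dots> = int t"
    proof -
      have "int (f s) = v" unfolding f_def using v0 rs by auto
      moreover have "b = int (l r) - int r - 1" unfolding br bet_def l_def ..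
      ultimately show ?thesis unfolding v_def by simp
    qed
    finally show ?thesis by simp
  qed
  have n22: "no_2x2 H"
    unfolding no_2x2_def
  proof
    assume "\<exists>i j. (i, j) \<in> H \<and> (i + 1, j) \<in> H \<and> (i, j + 1) \<in> H \<and> (i + 1, j + 1) \<in> H"
    then obtain i j where h: "(i, j) \<in> H" "(i + 1, j) \<in> H" "(i + 1, j + 1) \<in> H" by blast
    have "r \<le> i" using rows[of i] h(1) unfolding Hc by auto
    moreover have "i + 1 \<le> s" using rows[of "i + 1"] h(2) unfolding Hc by auto
    ultimately have "f i + 1 = l (Suc i)" using F5 by simp
    then show False using h(1,3) unfolding Hc by simp
  qed
  define A where "A = cell_adj H"
  define p0 where "p0 = (r, l r - 1)"
  have rowl: "\<And>i j. (p0, (i, l i - 1)) \<in> A\<^sup>* \<Longrightarrow> (i, j) \<in> H \<Longrightarrow> (p0, (i, j)) \<in> A\<^sup>*"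
  proof -
    fix i j assume st: "(p0, (i, l i - 1)) \<in> A\<^sup>*" and ij: "(i, j) \<in> H"
    have "\<forall>j. j + d = l i - 1 \<longrightarrow> (i, j) \<in> H \<longrightarrow> (p0, (i, j)) \<in> A\<^sup>*" for d
    proof (induction d)
      case 0 then show ?case using st by simp
    next
      case (Suc d)
      show ?case
      proof (intro allI impI)
        fix j assume jd: "j + Suc d = l i - 1" and jH: "(i, j) \<in> H"
        have j1H: "(i, j + 1) \<in> H" using jd jH unfolding Hc by simp
        have "(p0, (i, j + 1)) \<in> A\<^sup>*" using Suc.IH j1H jd by simp
        moreover have "((i, j + 1), (i, j)) \<in> A" unfolding A_def by (rule cadj[OF j1H jH]) simp
        ultimately show "(p0, (i, j)) \<in> A\<^sup>*" by (rule rtrancl_into_rtrancl)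
      qed
    qed
    moreover have "j + (l i - 1 - j) = l i - 1" using ij unfolding Hc by simp
    ultimately show "(p0, (i, j)) \<in> A\<^sup>*" using ij by blast
  qed
  have rowstart: "r + n \<le> s \<Longrightarrow> (p0, (r + n, l (r + n) - 1)) \<in> A\<^sup>*" for n
  proof (induction n)
    case 0 then show ?case unfolding p0_def by simp
  next
    case (Suc n)
    define i where "i = r + Suc n"
    define i0 where "i0 = r + n"
    have i0s: "i0 \<le> s" "i0 < s" using Suc.prems unfolding i0_def by auto
    have li: "1 \<le> l i" using lpos Suc.prems unfolding i_def by simp
    have fi0: "f i0 + 1 = l i" using F5[of i0] i0s unfolding i0_def i_def by simp
    have lii0: "l i \<le> l i0" using lanti unfolding i_def i0_def by simp
    have q1: "l i - 1 < l i0" using li lii0 by linarith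
    have q2: "f i0 \<le> l i - 1" using fi0 by linarith
    have h0: "(i0, l i - 1) \<in> H" unfolding Hc using q1 q2 by simp
    have h1: "(i, l i - 1) \<in> H" unfolding Hc using F4a[of i] Suc.prems li unfolding i_def by simp
    have "(p0, (i0, l i - 1)) \<in> A\<^sup>*" using rowl[OF _ h0] Suc.IH i0s unfolding i0_def by simp
    moreover have "((i0, l i - 1), (i, l i - 1)) \<in> A" unfolding A_def
      by (rule cadj[OF h0 h1]) (simp add: i_def i0_def)
    ultimately show ?case unfolding i_def[symmetric] by (rule rtrancl_into_rtrancl)
  qed
  have reach: "\<And>p. p \<in> H \<Longrightarrow> (p0, p) \<in> A\<^sup>*"
  proof -
    fix p assume pH: "p \<in> H"
    obtain i j where pij: "p = (i, j)" by fastforce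
    have "(i, j) \<in> H" using pH pij by simp
    then have "f i < l i" unfolding Hc by simp
    then have ri: "r \<le> i" "i \<le> s" using rows[of i] by auto
    then have "(p0, (r + (i - r), l (r + (i - r)) - 1)) \<in> A\<^sup>*" using rowstart[of "i - r"] by simp
    then have "(p0, (i, l i - 1)) \<in> A\<^sup>*" using ri by simp
    then show "(p0, p) \<in> A\<^sup>*" using rowl pH pij by simp
  qed
  have symA: "sym (A\<^sup>*)" unfolding A_def by (rule sym_rtrancl[OF cadj_sym])
  have con: "cells_connected H"
    unfolding cells_connected_def
  proof (intro ballI)
    fix p q assume "p \<in> H" "q \<in> H"
    then have "(p0, p) \<in> A\<^sup>*" "(p0, q) \<in> A\<^sup>*" using reach by auto
    then have "(p, p0) \<in> A\<^sup>*" using symA by (meson symD)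
    then show "(p, q) \<in> (cell_adj H)\<^sup>*" using \<open>(p0, q) \<in> A\<^sup>*\<close> unfolding A_def by (rule rtrancl_trans)
  qed
  have "rim_hook_removal t xs ys"
    unfolding rim_hook_removal_def using px py sub cH con n22 unfolding H_def by simp
  then show ?thesis by blast
qed

lemma oddcount:
  "2 * int (card {x. b - int n < x \<and> x \<le> b \<and> odd x}) = int n + (if odd n then (if odd b then 1 else -1) else 0)"
proof (induction n)
  case 0
  have e: "{x. b - int 0 < x \<and> x \<le> b \<and> odd x} = {}" by auto
  show ?case unfolding e by simp
next
  case (Suc n)
  have e: "{x. b - int (Suc n) < x \<and> x \<le> b \<and> odd x} =
        {x. b - int n < x \<and> x \<le> b \<and> odd x} \<union> (if odd (b - int n) then {b - int n} else {})"
  proof (intro set_eqI)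
    fix x show "x \<in> {x. b - int (Suc n) < x \<and> x \<le> b \<and> odd x} \<longleftrightarrow>
        x \<in> {x. b - int n < x \<and> x \<le> b \<and> odd x} \<union> (if odd (b - int n) then {b - int n} else {})"
      by (cases "x = b - int n") auto
  qed
  have fin: "finite {x. b - int n < x \<and> x \<le> b \<and> odd x}"
    by (rule finite_subset[of _ "{b - int n<..b}"]) auto
  have nin: "b - int n \<notin> {x. b - int n < x \<and> x \<le> b \<and> odd x}" by simp
  have c: "card {x. b - int (Suc n) < x \<and> x \<le> b \<and> odd x} =
        card {x. b - int n < x \<and> x \<le> b \<and> odd x} + (if odd (b - int n) then 1 else 0)"
    unfolding e using fin nin by (auto simp: card_insert_if)
  have p: "odd (b - int n) = (odd b \<noteq> odd n)" by presburger
  show ?case unfolding c using Suc.IH p by (cases "odd n"; cases "odd b") auto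
qed

lemma mod_res: "c < t \<Longrightarrow> (int t * k + int c) mod int t = int c"
  by simp

lemma runner_other:
  assumes t: "t \<ge> 1" and c: "c < t" and c0: "c0 < t" and ne: "c \<noteq> c0"
  shows "{k. int t * k + int c \<in> insert (int t * k0 + int c0 - int t) (B - {int t * k0 + int c0})}
       = {k. int t * k + int c \<in> B}"
proof -
  have n1: "\<And>k. int t * k + int c \<noteq> int t * k0 + int c0"
    using mod_res[OF c] mod_res[OF c0] ne by (metis of_nat_eq_iff)
  have n2: "\<And>k. int t * k + int c \<noteq> int t * k0 + int c0 - int t"
  proof -
    fix k
    have "int t * k0 + int c0 - int t = int t * (k0 - 1) + int c0" by (simp add: algebra_simps)
    then show "int t * k + int c \<noteq> int t * k0 + int c0 - int t"
      using mod_res[OF c, of k] mod_res[OF c0, of "k0 - 1"] ne by (metis of_nat_eq_iff)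
  qed
  show ?thesis using n1 n2 by auto
qed

lemma runner_same:
  assumes t: "t \<ge> 1"
  shows "{k. int t * k + int c0 \<in> insert (int t * k0 + int c0 - int t) (B - {int t * k0 + int c0})}
       = insert (k0 - 1) ({k. int t * k + int c0 \<in> B} - {k0})"
proof -
  have i1: "\<And>k. (int t * k + int c0 = int t * k0 + int c0) = (k = k0)" using t by simp
  have i2: "\<And>k. (int t * k + int c0 = int t * k0 + int c0 - int t) = (k = k0 - 1)"
  proof -
    fix k
    have "(int t * k + int c0 = int t * k0 + int c0 - int t) = (int t * k = int t * (k0 - 1))"
      by (simp add: algebra_simps)
    also have "\<dots> = (k = k0 - 1)" using t by simp
    finally show "(int t * k + int c0 = int t * k0 + int c0 - int t) = (k = k0 - 1)" .
  qed
  show ?thesis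
  proof (intro set_eqI)
    fix k
    show "k \<in> {k. int t * k + int c0 \<in> insert (int t * k0 + int c0 - int t) (B - {int t * k0 + int c0})}
       \<longleftrightarrow> k \<in> insert (k0 - 1) ({k. int t * k + int c0 \<in> B} - {k0})"
      using i1[of k] i2[of k] by auto
  qed
qed

lemma step_facts:
  assumes rh: "rim_hook_removal t la mu" and t: "t \<ge> 1"
  shows "\<exists>b c0 k0. c0 < t \<and> b = int t * k0 + int c0 \<and>
    (srank la - srank mu) mod 4 = (2 * int (card {x. b - int t < x \<and> x \<le> b \<and> odd x})) mod 4 \<and>
    (\<forall>c<t. chB t (beta_set mu) c = chB t (beta_set la) c) \<and>
    (\<forall>c<t. c \<noteq> c0 \<longrightarrow> quotient_comp t la c = quotient_comp t mu c) \<and>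
    psize (quotient_comp t la c0) = Suc (psize (quotient_comp t mu c0)) \<and>
    srank (quotient_comp t la c0) mod 4 =
      (srank (quotient_comp t mu c0) + (if odd (k0 + chB t (beta_set la) c0) then 2 else 0)) mod 4"
proof -
  have pl: "is_partition la" and pm: "is_partition mu" using rh unfolding rim_hook_removal_def by auto
  have sl: "sorted_wrt (\<ge>) la" and sm: "sorted_wrt (\<ge>) mu" using pl pm by (auto simp: part_sorted)
  obtain b where bin: "b \<in> beta_set la" and bnot: "b - int t \<notin> beta_set la"
    and Bm: "beta_set mu = insert (b - int t) (beta_set la - {b})"
    and ocr: "oc la = oc mu + card {x. b - int t < x \<and> x \<le> b \<and> odd x}"
    using decode[OF rh t] by blast
  define c0 where "c0 = nat (b mod int t)"
  define k0 where "k0 = b div int t"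
  have c0t: "c0 < t" unfolding c0_def using t by (simp add: nat_less_iff)
  have bdec: "b = int t * k0 + int c0" unfolding c0_def k0_def using t
    by (simp add: mult_div_mod_eq)
  have sr: "(srank la - srank mu) mod 4 = (2 * int (card {x. b - int t < x \<and> x \<le> b \<and> odd x})) mod 4"
  proof -
    have a1: "srank la mod 4 = (2 * int (oc la)) mod 4" by (rule srank_oc[OF sl])
    have a2: "srank mu mod 4 = (2 * int (oc mu)) mod 4" by (rule srank_oc[OF sm])
    have "(srank la - srank mu) mod 4 = (srank la mod 4 - srank mu mod 4) mod 4" by (simp add: mod_diff_eq)
    also have "\<dots> = ((2 * int (oc la)) mod 4 - (2 * int (oc mu)) mod 4) mod 4" unfolding a1 a2 ..
    also have "\<dots> = (2 * int (oc la) - 2 * int (oc mu)) mod 4" by (simp add: mod_diff_eq)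
    also have "\<dots> = (2 * int (card {x. b - int t < x \<and> x \<le> b \<and> odd x})) mod 4" unfolding ocr by simp
    finally show ?thesis .
  qed
  have bml: "bmaya (beta_set la)" by (rule bmaya_beta[OF sl])
  have ch_inv: "\<forall>c<t. chB t (beta_set mu) c = chB t (beta_set la) c"
  proof (intro allI impI)
    fix c assume "c < t"
    have n: "b - int t \<notin> beta_set la - {b}" using bnot by simp
    have md: "(b - int t) mod int t = b mod int t" by simp
    show "chB t (beta_set mu) c = chB t (beta_set la) c"
      unfolding Bm using chB_insert[OF bmaya_remove[OF bml] n, of t c] chB_remove[OF bml bin, of t c] md by simp
  qed
  have Bm': "beta_set mu = insert (int t * k0 + int c0 - int t) (beta_set la - {int t * k0 + int c0})"
    using Bm bdec by simp
  have qother: "\<forall>c<t. c \<noteq> c0 \<longrightarrow> quotient_comp t la c = quotient_comp t mu c"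
  proof (intro allI impI)
    fix c assume "c < t" "c \<noteq> c0"
    then have "beta_runner t mu c = beta_runner t la c"
      unfolding beta_runner_def Bm' using runner_other[OF t _ c0t] by blast
    then show "quotient_comp t la c = quotient_comp t mu c" unfolding quotient_comp_qc by simp
  qed
  define R where "R = beta_runner t la c0"
  have Rm: "beta_runner t mu c0 = insert (k0 - 1) (R - {k0})"
    unfolding beta_runner_def Bm' R_def using runner_same[OF t] by blast
  have bR: "bmaya R" unfolding R_def beta_runner_def by (rule runner_bmaya[OF bml t])
  have kR: "k0 \<in> R" unfolding R_def beta_runner_def using bin bdec by simp
  have k1R: "k0 - 1 \<notin> R"
  proof -
    have "int t * (k0 - 1) + int c0 = b - int t" using bdec by (simp add: algebra_simps)
    then show ?thesis unfolding R_def beta_runner_def using bnot by simp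
  qed
  have chR: "ch R = chB t (beta_set la) c0" unfolding R_def beta_runner_def by (rule ch_runner[OF bml t c0t])
  note qs = qc_step[OF bR kR k1R]
  have ps: "psize (quotient_comp t la c0) = Suc (psize (quotient_comp t mu c0))"
    unfolding quotient_comp_qc Rm R_def[symmetric] by (rule qs(1))
  have ss: "srank (quotient_comp t la c0) mod 4 =
      (srank (quotient_comp t mu c0) + (if odd (k0 + chB t (beta_set la) c0) then 2 else 0)) mod 4"
    unfolding quotient_comp_qc Rm R_def[symmetric] chR[symmetric] by (rule qs(2))
  show ?thesis using c0t bdec sr ch_inv qother ps ss by blast
qed

lemma core_empty:
  assumes core: "is_tcore t ka" and t: "t \<ge> 1" and c: "c < t"
  shows "quotient_comp t ka c = []"
proof -
  have pk: "is_partition ka" using core unfolding is_tcore_def by simp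
  have flush: "\<And>b. b \<in> beta_set ka \<Longrightarrow> b - int t \<in> beta_set ka"
  proof (rule ccontr)
    fix b assume "b \<in> beta_set ka" "b - int t \<notin> beta_set ka"
    then obtain mu where "rim_hook_removal t ka mu" using encode[OF pk t] by blast
    then show False using core unfolding is_tcore_def by blast
  qed
  define R where "R = beta_runner t ka c"
  have down: "\<And>k. k \<in> R \<Longrightarrow> k - 1 \<in> R"
  proof -
    fix k assume "k \<in> R"
    then have "int t * k + int c \<in> beta_set ka" unfolding R_def beta_runner_def by simp
    then have "int t * k + int c - int t \<in> beta_set ka" by (rule flush)
    moreover have "int t * k + int c - int t = int t * (k - 1) + int c" by (simp add: algebra_simps)
    ultimately show "k - 1 \<in> R" unfolding R_def beta_runner_def by simp
  qed
  have downn: "\<And>k. k \<in> R \<Longrightarrow> k - int n \<in> R" for n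
  proof (induction n)
    case 0 then show ?case by simp
  next
    case (Suc n)
    then have "k - int n - 1 \<in> R" using down by blast
    then show ?case by (simp add: algebra_simps)
  qed
  have G: "Gs R = {}"
  proof (rule ccontr)
    assume "Gs R \<noteq> {}"
    then obtain g where g: "g \<notin> R" "count_above R g > 0" unfolding Gs_def by auto
    then have "{s \<in> R. g < s} \<noteq> {}" unfolding count_above_def by (metis card.empty less_irrefl)
    then obtain s where s: "s \<in> R" "g < s" by blast
    have "s - int (nat (s - g)) \<in> R" using downn[OF s(1)] by blast
    moreover have "s - int (nat (s - g)) = g" using s(2) by simp
    ultimately show False using g(1) by simp
  qed
  show ?thesis unfolding quotient_comp_qc R_def[symmetric] qc_def G by simp
qed

lemma sum_change:
  fixes F G :: "nat \<Rightarrow> int"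
  assumes "c0 < t" "\<And>i. i < t \<Longrightarrow> i \<noteq> c0 \<Longrightarrow> F i = G i"
  shows "(\<Sum>i<t. F i) = (\<Sum>i<t. G i) + (F c0 - G c0)"
proof -
  have f: "finite {..<t}" by simp
  have c: "c0 \<in> {..<t}" using assms(1) by simp
  have "(\<Sum>i<t. F i) = F c0 + (\<Sum>i\<in>{..<t} - {c0}. F i)" by (rule sum.remove[OF f c])
  moreover have "(\<Sum>i<t. G i) = G c0 + (\<Sum>i\<in>{..<t} - {c0}. G i)" by (rule sum.remove[OF f c])
  moreover have "(\<Sum>i\<in>{..<t} - {c0}. F i) = (\<Sum>i\<in>{..<t} - {c0}. G i)"
    using assms(2) by (intro sum.cong) auto
  ultimately show ?thesis by simp
qed

lemma arithA:
  fixes Smu Sk Sla Qmu Qla K2 t :: int and a :: nat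
  assumes "4 dvd (Smu - Sk - 2 * int a * Qmu)" "4 dvd (Sla - Smu - K2)" "K2 = t"
    "t mod 4 = int (2 * a)" "Qla = Qmu + 1"
  shows "4 dvd (Sla - Sk - 2 * int a * Qla)"
proof -
  have "t mod 4 < 4" by simp
  then have "int (2 * a) < 4" using assms(4) by simp
  then have "a < 2" by simp
  then have "a = 0 \<or> a = 1" by auto
  then show ?thesis using assms by (elim disjE) (simp_all, presburger+)
qed

lemma arithB:
  fixes Smu Sk Sla Xmu Xla Ymu Yla K2 t b k0 n0 c0 d :: int and a :: nat
  assumes "4 dvd (Smu - Sk - 2 * Xmu - Ymu)" "4 dvd (Sla - Smu - K2)"
    "K2 = t + (if odd b then 1 else -1)" "t mod 4 = int (1 + 2 * a)"
    "Xla = Xmu + (n0 + c0 + int a)" "4 dvd (Yla - Ymu - d)" "d = (if odd (k0 + n0) then 2 else 0)"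
    "odd b = odd (k0 + c0)"
  shows "4 dvd (Sla - Sk - 2 * Xla - Yla)"
proof -
  define q where "q = t div 4"
  have tq: "t = 4 * q + 1 + 2 * int a" unfolding q_def using assms(4) by (metis add.assoc div_mod_decomp_int of_nat_add of_nat_mult of_nat_numeral of_nat_1 mult.commute)
  define e where "e = (if odd (k0 + c0) then 2 else (0::int))"
  have K: "K2 = 4 * q + 2 * int a + e" unfolding e_def using assms(3,8) tq by (cases "odd b") simp_all
  have W: "K2 - 2 * (n0 + c0 + int a) - d = 4 * q + 4 * k0 + (e - 2 * (k0 + c0)) - (d + 2 * (k0 + n0))"
    unfolding K by (simp add: algebra_simps)
  have w1: "4 dvd (e - 2 * (k0 + c0))" unfolding e_def by presburger
  have w2: "4 dvd (d + 2 * (k0 + n0))" unfolding assms(7) by presburger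
  have w3: "4 dvd (4 * q + 4 * k0)" by simp
  have Wd: "4 dvd (K2 - 2 * (n0 + c0 + int a) - d)" unfolding W using w1 w2 w3
    by (metis dvd_add dvd_diff add.assoc)
  have E: "Sla - Sk - 2 * Xla - Yla = (Smu - Sk - 2 * Xmu - Ymu) + (Sla - Smu - K2) - (Yla - Ymu - d)
      + (K2 - 2 * (n0 + c0 + int a) - d)"
    unfolding assms(5) by (simp add: algebra_simps)
  show ?thesis unfolding E using assms(1,2,6) Wd by (metis dvd_add dvd_diff)
qed

lemma chain:
  assumes ch: "(rim_hook_removal t)\<^sup>*\<^sup>* la ka" and core: "is_tcore t ka" and t: "t \<ge> 1"
  shows "(\<forall>c<t. chB t (beta_set la) c = chB t (beta_set ka) c) \<and>
    (int t mod 4 = int (2 * a) \<longrightarrow>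
       4 dvd (srank la - srank ka - 2 * int a * (\<Sum>i<t. int (psize (quotient_comp t la i))))) \<and>
    (int t mod 4 = int (1 + 2 * a) \<longrightarrow>
       4 dvd (srank la - srank ka
         - 2 * (\<Sum>i<t. (nvec t ka i + int i + int a) * int (psize (quotient_comp t la i)))
         - (\<Sum>i<t. srank (quotient_comp t la i))))"
  using ch
proof (induction rule: converse_rtranclp_induct)
  case base
  have e: "\<And>i. i < t \<Longrightarrow> quotient_comp t ka i = []" using core_empty[OF core t] by blast
  have s1: "(\<Sum>i<t. int (psize (quotient_comp t ka i))) = 0"
    using e by (intro sum.neutral) (simp add: psize_def)
  have s2: "(\<Sum>i<t. (nvec t ka i + int i + int a) * int (psize (quotient_comp t ka i))) = 0"
    using e by (intro sum.neutral) (simp add: psize_def)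
  have s3: "(\<Sum>i<t. srank (quotient_comp t ka i)) = 0"
    using e by (intro sum.neutral) (simp add: srank_nil)
  show ?case unfolding s1 s2 s3 by simp
next
  case (step la mu)
  obtain b c0 k0 where c0t: "c0 < t" and bdec: "b = int t * k0 + int c0"
    and sr: "(srank la - srank mu) mod 4 = (2 * int (card {x. b - int t < x \<and> x \<le> b \<and> odd x})) mod 4"
    and chi: "\<forall>c<t. chB t (beta_set mu) c = chB t (beta_set la) c"
    and qo: "\<forall>c<t. c \<noteq> c0 \<longrightarrow> quotient_comp t la c = quotient_comp t mu c"
    and ps: "psize (quotient_comp t la c0) = Suc (psize (quotient_comp t mu c0))"
    and ss: "srank (quotient_comp t la c0) mod 4 =
      (srank (quotient_comp t mu c0) + (if odd (k0 + chB t (beta_set la) c0) then 2 else 0)) mod 4"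
    using step_facts[OF step.hyps(1) t] by blast
  have IH1: "\<forall>c<t. chB t (beta_set mu) c = chB t (beta_set ka) c" using step.IH by blast
  have C1: "\<forall>c<t. chB t (beta_set la) c = chB t (beta_set ka) c" using IH1 chi by simp
  have pk: "is_partition ka" using core unfolding is_tcore_def by simp
  define n0 where "n0 = nvec t ka c0"
  have n0c: "n0 = chB t (beta_set la) c0"
    unfolding n0_def using nvec_chB[OF part_sorted[OF pk] t c0t] C1 c0t by simp
  define K2 where "K2 = 2 * int (card {x. b - int t < x \<and> x \<le> b \<and> odd x})"
  have K2v: "K2 = int t + (if odd t then (if odd b then 1 else -1) else 0)"
    unfolding K2_def by (rule oddcount)
  have dS: "4 dvd (srank la - srank mu - K2)" using sr unfolding K2_def by (simp add: mod_eq_dvd_iff)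
  have Qs: "(\<Sum>i<t. int (psize (quotient_comp t la i))) = (\<Sum>i<t. int (psize (quotient_comp t mu i))) + 1"
    using sum_change[OF c0t, of "\<lambda>i. int (psize (quotient_comp t la i))" "\<lambda>i. int (psize (quotient_comp t mu i))"] qo ps
    by simp
  have Xs: "(\<Sum>i<t. (nvec t ka i + int i + int a) * int (psize (quotient_comp t la i)))
      = (\<Sum>i<t. (nvec t ka i + int i + int a) * int (psize (quotient_comp t mu i))) + (n0 + int c0 + int a)"
    using sum_change[OF c0t, of "\<lambda>i. (nvec t ka i + int i + int a) * int (psize (quotient_comp t la i))"
        "\<lambda>i. (nvec t ka i + int i + int a) * int (psize (quotient_comp t mu i))"] qo ps
    unfolding n0_def by (simp add: algebra_simps)
  have Ys: "(\<Sum>i<t. srank (quotient_comp t la i)) = (\<Sum>i<t. srank (quotient_comp t mu i))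
       + (srank (quotient_comp t la c0) - srank (quotient_comp t mu c0))"
    using sum_change[OF c0t, of "\<lambda>i. srank (quotient_comp t la i)" "\<lambda>i. srank (quotient_comp t mu i)"] qo
    by simp
  have dY: "4 dvd (srank (quotient_comp t la c0) - srank (quotient_comp t mu c0) - (if odd (k0 + n0) then 2 else 0))"
    using ss unfolding n0c mod_eq_dvd_iff by (simp add: algebra_simps)
  have A: "int t mod 4 = int (2 * a) \<longrightarrow>
       4 dvd (srank la - srank ka - 2 * int a * (\<Sum>i<t. int (psize (quotient_comp t la i))))"
  proof
    assume h: "int t mod 4 = int (2 * a)"
    have ev: "even (int t)" using h by presburger
    then have "K2 = int t" using K2v by simp
    moreover have "4 dvd (srank mu - srank ka - 2 * int a * (\<Sum>i<t. int (psize (quotient_comp t mu i))))"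
      using step.IH h by blast
    ultimately show "4 dvd (srank la - srank ka - 2 * int a * (\<Sum>i<t. int (psize (quotient_comp t la i))))"
      using arithA[OF _ dS _ h Qs] by blast
  qed
  have B: "int t mod 4 = int (1 + 2 * a) \<longrightarrow>
       4 dvd (srank la - srank ka
         - 2 * (\<Sum>i<t. (nvec t ka i + int i + int a) * int (psize (quotient_comp t la i)))
         - (\<Sum>i<t. srank (quotient_comp t la i)))"
  proof
    assume h: "int t mod 4 = int (1 + 2 * a)"
    have od: "odd (int t)" using h by presburger
    then have K: "K2 = int t + (if odd b then 1 else -1)" using K2v by simp
    have pb: "odd b = odd (k0 + int c0)"
    proof -
      have "odd (int t * k0) = odd k0" using od by simp
      then show ?thesis unfolding bdec by presburger
    qed
    have "4 dvd (srank mu - srank ka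
         - 2 * (\<Sum>i<t. (nvec t ka i + int i + int a) * int (psize (quotient_comp t mu i)))
         - (\<Sum>i<t. srank (quotient_comp t mu i)))"
      using step.IH h by blast
    then show "4 dvd (srank la - srank ka
         - 2 * (\<Sum>i<t. (nvec t ka i + int i + int a) * int (psize (quotient_comp t la i)))
         - (\<Sum>i<t. srank (quotient_comp t la i)))"
      using arithB[OF _ dS K h Xs _ refl pb] dY Ys by (metis (no_types, lifting) add_diff_cancel_left')
  qed
  show ?case using C1 A B by blast
qed

theorem mainTheorem6:
  fixes t a :: nat and pi kappa :: "nat list"
  assumes "t \<ge> 2" and "a \<in> {0, 1}"
    and "is_partition pi"
    and "tcore_of t pi kappa"
  shows "(int t mod 4 = int (2 * a) \<longrightarrow>
           srank pi mod 4 =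
             (srank kappa + 2 * int a * (\<Sum>i<t. int (psize (quotient_comp t pi i)))) mod 4)
       \<and> (int t mod 4 = int (1 + 2 * a) \<longrightarrow>
           srank pi mod 4 =
             (srank kappa
              + 2 * (\<Sum>i<t. (nvec t kappa i + int i + int a) * int (psize (quotient_comp t pi i)))
              + (\<Sum>i<t. srank (quotient_comp t pi i))) mod 4)"
proof -
  have t: "t \<ge> 1" using assms(1) by simp
  have ch: "(rim_hook_removal t)\<^sup>*\<^sup>* pi kappa" and core: "is_tcore t kappa"
    using assms(4) unfolding tcore_of_def by auto
  note C = chain[OF ch core t, of a]
  show ?thesis
  proof (intro conjI impI)
    assume h: "int t mod 4 = int (2 * a)"
    then have "4 dvd (srank pi - srank kappa - 2 * int a * (\<Sum>i<t. int (psize (quotient_comp t pi i))))"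
      using C by blast
    then show "srank pi mod 4 =
             (srank kappa + 2 * int a * (\<Sum>i<t. int (psize (quotient_comp t pi i)))) mod 4"
      unfolding mod_eq_dvd_iff by (simp add: algebra_simps)
  next
    assume h: "int t mod 4 = int (1 + 2 * a)"
    then have "4 dvd (srank pi - srank kappa
         - 2 * (\<Sum>i<t. (nvec t kappa i + int i + int a) * int (psize (quotient_comp t pi i)))
         - (\<Sum>i<t. srank (quotient_comp t pi i)))"
      using C by blast
    then show "srank pi mod 4 =
             (srank kappa
              + 2 * (\<Sum>i<t. (nvec t kappa i + int i + int a) * int (psize (quotient_comp t pi i)))
              + (\<Sum>i<t. srank (quotient_comp t pi i))) mod 4"
      unfolding mod_eq_dvd_iff by (simp add: algebra_simps)
  qed
qed

end
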